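(* Let $\gamma$ be the geodesic with $\gamma(0)=1$ and $\dot\gamma(0)=z_0+x_0$, $z_0\in\mathfrak z$, $x_0\in\mathfrak v$, and let $J=J_{z_0}$. (1) If $J=0$ and $x_0=0$, there are no points conjugate to $\gamma(0)$ along $\gamma$. (2) If $J=0$ and $x_0\neq0$, then for $t\neq0$, $\gamma(t)$ is conjugate to $\gamma(0)$ along $\gamma$ if and only if $-12/t^2$ is an eigenvalue of the linear operator $A:\mathfrak z\to\mathfrak z$, $A(z)=[x_0,J_zx_0]$; in that case $\mathrm{mult}_{cp}(t)=\dim\ker(A+\tfrac{12}{t^2}I)\le\dim\mathfrak z$. (3) If $J\neq0$ and $x_0=0$, let $-\lambda_1^2,\dots,-\lambda_q^2$ ($\lambda_k>0$, pairwise distinct) be the distinct negative real eigenvalues of $J^2$. Then $\gamma(t)$ is conjugate to $\gamma(0)$ along $\gamma$ if and only if $t\in\bigcup_{k=1}^q\frac{2\pi}{\lambda_k}\mathbb Z^*$, and for $t=\frac{2\pi}{\lambda_k}n$ ($n\in\mathbb Z^*$) $$\mathrm{mult}_{cp}\Big(\tfrac{2\pi}{\lambda_k}n\Big)=\sum_{h:\ \frac{\lambda_k}{n}\mid\lambda_h}\dim\ker(J^2+\lambda_h^2I)\le\dim\mathfrak v.$$ (In particular, if $J^2$ has no negative eigenvalues there are no conjugate points.)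
   Context: Let $N$ be a connected, simply connected, 2-step nilpotent real Lie group with Lie algebra $\mathfrak n$ and center $\mathfrak z$. Let $\langle\,,\rangle$ be an inner product on $\mathfrak n$, meaning a nondegenerate symmetric bilinear form (possibly indefinite); the same symbol denotes the induced left-invariant pseudo-Riemannian metric on $N$, with Levi-Civita connection $\nabla$. Assume the restriction of $\langle\,,\rangle$ to $\mathfrak z$ is nondegenerate and put $\mathfrak v=\mathfrak z^\perp$, so $\mathfrak n=\mathfrak z\oplus\mathfrak v$ orthogonally. For $z\in\mathfrak z$ define $J_z:\mathfrak v\to\mathfrak v$ by $\langle J_zx,y\rangle=\langle z,[x,y]\rangle$ for all $y\in\mathfrak v$; $J_z$ is skew-adjoint. All tangent spaces of $N$ are identified with $\mathfrak n=T_1N$ via left translation; with this identification the geodesic $\gamma$ with $\gamma(0)=1$, $\dot\gamma(0)=z_0+x_0$ satisfies $\dot\gamma(t)=z_0+e^{tJ_{z_0}}x_0$. A Jacobi field along $\gamma$ is a vector field $Y$ along $\gamma$ with $\nabla_{\dot\gamma}\nabla_{\dot\gamma}Y+R(Y,\dot\gamma)\dot\gamma=0$, where $R(X,Y)=\nabla_X\nabla_Y-\nabla_Y\nabla_X-\nabla_{[X,Y]}$. For $t_0\neq0$, $\gamma(t_0)$ is conjugate to $\gamma(0)$ along $\gamma$ if there is a nontrivial Jacobi field $Y$ along $\gamma$ with $Y(0)=Y(t_0)=0$; its multiplicity $\mathrm{mult}_{cp}(t_0)$ is the dimension of the space of Jacobi fields vanishing at $0$ and $t_0$. $\mathbb Z^*=\mathbb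 Z\setminus\{0\}$; for real $a,b$, $a\mid b$ means $b$ is a nonzero integer multiple of $a$. *)

theory Defs
  imports "HOL-Analysis.Analysis" "HOL-Library.Function_Algebras"
begin

definition lie_bracket :: "('n::real_vector \<Rightarrow> 'n \<Rightarrow> 'n) \<Rightarrow> bool" where
  "lie_bracket br \<longleftrightarrow> bilinear br \<and> (\<forall>x. br x x = 0) \<and>
     (\<forall>x y w. br x (br y w) + br y (br w x) + br w (br x y) = 0)"

definition two_step_nilpotent :: "('n::real_vector \<Rightarrow> 'n \<Rightarrow> 'n) \<Rightarrow> bool" where
  "two_step_nilpotent br \<longleftrightarrow> lie_bracket br \<and> (\<forall>x y w. br (br x y) w = 0) \<and> (\<exists>x y. br x y \<noteq> 0)"

definition lie_center :: "('n::real_vector \<Rightarrow> 'n \<Rightarrow> 'n) \<Rightarrow> 'n set" where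
  "lie_center br = {z. \<forall>x. br z x = 0}"

text \<open>Inner product = nondegenerate symmetric bilinear form (possibly indefinite).\<close>
definition inner_prod :: "('n::real_vector \<Rightarrow> 'n \<Rightarrow> real) \<Rightarrow> bool" where
  "inner_prod g \<longleftrightarrow> bilinear g \<and> (\<forall>x y. g x y = g y x) \<and> (\<forall>x. (\<forall>y. g x y = 0) \<longrightarrow> x = 0)"

definition nondeg_on :: "('n::real_vector \<Rightarrow> 'n \<Rightarrow> real) \<Rightarrow> 'n set \<Rightarrow> bool" where
  "nondeg_on g S \<longleftrightarrow> (\<forall>x\<in>S. (\<forall>y\<in>S. g x y = 0) \<longrightarrow> x = 0)"

definition orth_compl :: "('n::real_vector \<Rightarrow> 'n \<Rightarrow> real) \<Rightarrow> 'n set \<Rightarrow> 'n set" where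
  "orth_compl g S = {x. \<forall>y\<in>S. g x y = 0}"

definition vpart :: "('n::real_vector \<Rightarrow> 'n \<Rightarrow> real) \<Rightarrow> ('n \<Rightarrow> 'n \<Rightarrow> 'n) \<Rightarrow> 'n set" where
  "vpart g br = orth_compl g (lie_center br)"

definition Jmap :: "('n::real_vector \<Rightarrow> 'n \<Rightarrow> real) \<Rightarrow> ('n \<Rightarrow> 'n \<Rightarrow> 'n) \<Rightarrow> 'n \<Rightarrow> 'n \<Rightarrow> 'n" where
  "Jmap g br z x = (THE w. w \<in> vpart g br \<and> (\<forall>y\<in>vpart g br. g w y = g z (br x y)))"

text \<open>Levi-Civita connection on left-invariant fields (Koszul formula).\<close>
definition lc_conn :: "('n::real_vector \<Rightarrow> 'n \<Rightarrow> real) \<Rightarrow> ('n \<Rightarrow> 'n \<Rightarrow> 'n) \<Rightarrow> 'n \<Rightarrow> 'n \<Rightarrow> 'n" where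
  "lc_conn g br x y = (THE u. \<forall>w. 2 * g u w = g (br x y) w - g (br y w) x + g (br w x) y)"

definition curv :: "('n::real_vector \<Rightarrow> 'n \<Rightarrow> real) \<Rightarrow> ('n \<Rightarrow> 'n \<Rightarrow> 'n) \<Rightarrow> 'n \<Rightarrow> 'n \<Rightarrow> 'n \<Rightarrow> 'n" where
  "curv g br x y w = lc_conn g br x (lc_conn g br y w) - lc_conn g br y (lc_conn g br x w)
      - lc_conn g br (br x y) w"

text \<open>c is the left-trivialized velocity of a geodesic:
  nabla_{dot gamma} dot gamma = c' + nabla_c c = 0.\<close>
definition geodesic_velocity ::
  "('n::real_normed_vector \<Rightarrow> 'n \<Rightarrow> real) \<Rightarrow> ('n \<Rightarrow> 'n \<Rightarrow> 'n) \<Rightarrow> (real \<Rightarrow> 'n) \<Rightarrow> bool" where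
  "geodesic_velocity g br c \<longleftrightarrow>
     (\<forall>t. (c has_vector_derivative (- lc_conn g br (c t) (c t))) (at t))"

text \<open>Jacobi field along the geodesic with left-trivialized velocity c, written in the
  left-invariant frame: covariant derivative along gamma is D Y = Y' + nabla_c Y.\<close>
definition jacobi_field ::
  "('n::real_normed_vector \<Rightarrow> 'n \<Rightarrow> real) \<Rightarrow> ('n \<Rightarrow> 'n \<Rightarrow> 'n) \<Rightarrow> (real \<Rightarrow> 'n) \<Rightarrow> (real \<Rightarrow> 'n) \<Rightarrow> bool" where
  "jacobi_field g br c Y \<longleftrightarrow> (\<exists>Y1 W1. \<forall>t.
     (Y has_vector_derivative Y1 t) (at t) \<and>
     ((\<lambda>s. Y1 s + lc_conn g br (c s) (Y s)) has_vector_derivative W1 t) (at t) \<and>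
     W1 t + lc_conn g br (c t) (Y1 t + lc_conn g br (c t) (Y t))
       + curv g br (Y t) (c t) (c t) = 0)"

definition conjugate_at ::
  "('n::real_normed_vector \<Rightarrow> 'n \<Rightarrow> real) \<Rightarrow> ('n \<Rightarrow> 'n \<Rightarrow> 'n) \<Rightarrow> (real \<Rightarrow> 'n) \<Rightarrow> real \<Rightarrow> bool" where
  "conjugate_at g br c t0 \<longleftrightarrow> t0 \<noteq> 0 \<and>
     (\<exists>Y. jacobi_field g br c Y \<and> Y 0 = 0 \<and> Y t0 = 0 \<and> Y \<noteq> (\<lambda>_. 0))"

definition mult_cp ::
  "('n::real_normed_vector \<Rightarrow> 'n \<Rightarrow> real) \<Rightarrow> ('n \<Rightarrow> 'n \<Rightarrow> 'n) \<Rightarrow> (real \<Rightarrow> 'n) \<Rightarrow> real \<Rightarrow> nat" where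
  "mult_cp g br c t0 = vector_space.dim (\<lambda>(r::real) (f::real \<Rightarrow> 'n). (\<lambda>t. r *\<^sub>R f t))
     {Y. jacobi_field g br c Y \<and> Y 0 = 0 \<and> Y t0 = 0}"

end

theory Submission
  imports Defs
begin

lemma riesz_sub:
  fixes G :: "'a::euclidean_space \<Rightarrow> 'a \<Rightarrow> real"
  assumes G: "bilinear G" and S: "subspace S"
    and nd: "\<And>x. x \<in> S \<Longrightarrow> (\<forall>y\<in>S. G x y = 0) \<Longrightarrow> x = 0"
    and l: "linear l"
  shows "\<exists>w\<in>S. \<forall>y\<in>S. G w y = l y"
proof -
  obtain B where B: "B \<subseteq> S" "independent B" "S \<subseteq> span B" "card B = dim S"
    using basis_exists by blast
  have fB: "finite B" using B(2) finiteI_independent by blast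
  have spB: "span B = S" using B S span_mono span_eq_iff span_minimal by (metis subset_antisym)
  have indep: "\<And>c. (\<Sum>b\<in>B. c b *\<^sub>R b) = 0 \<Longrightarrow> \<forall>b\<in>B. c b = 0"
    using B(2) dependent_finite[OF fB] by blast
  have ext: "\<And>f::'a \<Rightarrow> real. linear f \<Longrightarrow> \<forall>b\<in>B. f b = 0 \<Longrightarrow> \<forall>y\<in>S. f y = 0"
  proof -
    fix f :: "'a \<Rightarrow> real" assume f: "linear f" "\<forall>b\<in>B. f b = 0"
    show "\<forall>y\<in>S. f y = 0"
    proof
      fix y assume "y \<in> S"
      then have "y \<in> span B" using spB by simp
      then show "f y = 0"
        using linear_eq_on_span[OF f(1) linear_zero, of B y] f(2) by auto
    qed
  qed
  define \<Phi> where "\<Phi> x = (\<Sum>b\<in>B. G x b *\<^sub>R b)" for x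
  have lin\<Phi>: "linear \<Phi>"
  proof (rule linearI)
    fix x y show "\<Phi> (x + y) = \<Phi> x + \<Phi> y"
      unfolding \<Phi>_def by (simp add: bilinear_ladd[OF G] scaleR_add_left sum.distrib)
  next
    fix c x show "\<Phi> (c *\<^sub>R x) = c *\<^sub>R \<Phi> x"
      unfolding \<Phi>_def by (simp add: bilinear_lmul[OF G] scaleR_sum_right)
  qed
  have \<Phi>S: "\<Phi> ` S \<subseteq> S"
    unfolding \<Phi>_def using B(1) S by (auto intro!: subspace_sum subspace_scale)
  have inj: "inj_on \<Phi> S"
  proof (rule linear_inj_on_iff_eq_0[OF lin\<Phi> S, THEN iffD2], intro ballI impI)
    fix x assume x: "x \<in> S" "\<Phi> x = 0"
    then have "\<forall>b\<in>B. G x b = 0" using indep[of "G x"] unfolding \<Phi>_def by blast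
    moreover have "linear (G x)" using G by (simp add: bilinear_def)
    ultimately have "\<forall>y\<in>S. G x y = 0" using ext by blast
    then show "x = 0" using nd x by blast
  qed
  have "dim (\<Phi> ` S) = dim S"
    using dim_image_eq[OF lin\<Phi>, of S] inj S by (metis span_eq_iff)
  then have \<Phi>eq: "\<Phi> ` S = S"
    by (intro subspace_dim_equal[OF linear_subspace_image[OF lin\<Phi> S] S \<Phi>S]) simp
  define v where "v = (\<Sum>b\<in>B. l b *\<^sub>R b)"
  have "v \<in> S" unfolding v_def using B(1) S by (auto intro!: subspace_sum subspace_scale)
  then have "v \<in> \<Phi> ` S" using \<Phi>eq by simp
  then obtain w where w: "w \<in> S" "\<Phi> w = v" by (metis imageE)
  have "(\<Sum>b\<in>B. (G w b - l b) *\<^sub>R b) = 0"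
  proof -
    have "(\<Sum>b\<in>B. (G w b - l b) *\<^sub>R b) = (\<Sum>b\<in>B. G w b *\<^sub>R b) - (\<Sum>b\<in>B. l b *\<^sub>R b)"
      by (simp only: scaleR_diff_left sum_subtractf)
    also have "\<dots> = 0" using w(2) unfolding \<Phi>_def v_def by simp
    finally show ?thesis .
  qed
  then have "\<forall>b\<in>B. G w b - l b = 0" by (rule indep)
  moreover have lG: "linear (G w)" using G by (simp add: bilinear_def)
  have "linear (\<lambda>y. G w y - l y)" by (rule linear_compose_sub[OF lG l])
  ultimately have "\<forall>y\<in>S. G w y - l y = 0" by (intro ext)
  then show ?thesis using w(1) by auto
qed

locale nset =
  fixes br :: "'n::euclidean_space \<Rightarrow> 'n \<Rightarrow> 'n" and g :: "'n \<Rightarrow> 'n \<Rightarrow> real"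
  assumes nil: "two_step_nilpotent br" and ip: "inner_prod g"
    and zndeg: "nondeg_on g (lie_center br)"
begin

abbreviation "Z \<equiv> lie_center br"
abbreviation "V \<equiv> vpart g br"
abbreviation "J \<equiv> Jmap g br"

lemma brbil: "bilinear br" using nil unfolding two_step_nilpotent_def lie_bracket_def by auto
lemma br_nn[simp]: "br x x = 0" using nil unfolding two_step_nilpotent_def lie_bracket_def by auto
lemma br_bb[simp]: "br (br x y) w = 0" using nil unfolding two_step_nilpotent_def by auto
lemma gbil: "bilinear g" using ip unfolding inner_prod_def by auto
lemma gsym: "g x y = g y x" using ip unfolding inner_prod_def by auto
lemma gnd: "(\<And>y. g x y = 0) \<Longrightarrow> x = 0" using ip unfolding inner_prod_def by auto

lemmas br_simps[simp] = bilinear_ladd[OF brbil] bilinear_radd[OF brbil] bilinear_lmul[OF brbil]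
  bilinear_rmul[OF brbil] bilinear_lneg[OF brbil] bilinear_rneg[OF brbil]
  bilinear_lzero[OF brbil] bilinear_rzero[OF brbil] bilinear_lsub[OF brbil] bilinear_rsub[OF brbil]
lemmas g_simps[simp] = bilinear_ladd[OF gbil] bilinear_radd[OF gbil] bilinear_lmul[OF gbil]
  bilinear_rmul[OF gbil] bilinear_lneg[OF gbil] bilinear_rneg[OF gbil]
  bilinear_lzero[OF gbil] bilinear_rzero[OF gbil] bilinear_lsub[OF gbil] bilinear_rsub[OF gbil]

lemma br_anti: "br x y = - br y x"
proof -
  have "br (x+y) (x+y) = br x (x+y) + br y (x+y)" by (rule bilinear_ladd[OF brbil])
  then have "0 = br x y + br y x" by simp
  then show ?thesis by (metis eq_neg_iff_add_eq_0)
qed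

lemma br_Z[simp]: "br x y \<in> Z" unfolding lie_center_def by simp
lemma Z_br1[simp]: "z \<in> Z \<Longrightarrow> br z x = 0" unfolding lie_center_def by simp
lemma Z_br2[simp]: "z \<in> Z \<Longrightarrow> br x z = 0" using br_anti Z_br1 by (metis neg_equal_0_iff_equal)

lemma subspace_Z: "subspace Z"
  unfolding subspace_def lie_center_def by simp

lemma inV: "v \<in> V \<longleftrightarrow> (\<forall>z\<in>Z. g v z = 0)"
  unfolding vpart_def orth_compl_def by simp

lemma subspace_V: "subspace V"
  unfolding subspace_def by (auto simp: inV)

lemma geq: "(\<And>y. g u y = g w y) \<Longrightarrow> u = w"
proof -
  assume "\<And>y. g u y = g w y"
  then have "\<And>y. g (u - w) y = 0" by simp
  then have "u - w = 0" by (rule gnd)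
  then show "u = w" by simp
qed

lemma lin_g1: "linear (g x)" using gbil by (simp add: bilinear_def)
lemma lin_br1: "linear (br x)" using brbil by (simp add: bilinear_def)

lemma decomp: "\<exists>xz\<in>Z. x - xz \<in> V"
proof -
  have nd: "\<And>x. x \<in> Z \<Longrightarrow> (\<forall>y\<in>Z. g x y = 0) \<Longrightarrow> x = 0"
    using zndeg unfolding nondeg_on_def by blast
  obtain w where w: "w \<in> Z" "\<forall>y\<in>Z. g w y = g x y"
    using riesz_sub[OF gbil subspace_Z nd lin_g1] by blast
  then have "x - w \<in> V" unfolding inV by simp
  then show ?thesis using w(1) by blast
qed

lemma ndV: "v \<in> V \<Longrightarrow> (\<forall>y\<in>V. g v y = 0) \<Longrightarrow> v = 0"
proof -
  assume v: "v \<in> V" "\<forall>y\<in>V. g v y = 0"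
  show "v = 0"
  proof (rule gnd)
    fix y
    obtain yz where yz: "yz \<in> Z" "y - yz \<in> V" using decomp by blast
    have "g v y = g v yz + g v (y - yz)" by simp
    also have "g v (y - yz) = 0" using v(2) yz(2) by blast
    also have "g v yz = 0" using v(1) yz(1) unfolding inV by blast
    finally show "g v y = 0" by simp
  qed
qed

lemma J_both: "J a b \<in> V \<and> (\<forall>y. g (J a b) y = g a (br b y))"
proof -
  have nd: "\<And>x. x \<in> UNIV \<Longrightarrow> (\<forall>y\<in>UNIV. g x y = 0) \<Longrightarrow> x = 0"
    using gnd by blast
  have l: "linear (\<lambda>y. g a (br b y))"
    using linear_compose[OF lin_br1 lin_g1] by (simp add: o_def)
  obtain w where w: "\<forall>y. g w y = g a (br b y)"
    using riesz_sub[OF gbil subspace_UNIV nd l] by blast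
  have wV: "w \<in> V" unfolding inV using w by simp
  have "J a b = w"
    unfolding Jmap_def
  proof (rule the_equality)
    show "w \<in> V \<and> (\<forall>y\<in>V. g w y = g a (br b y))" using wV w by simp
  next
    fix w' assume w': "w' \<in> V \<and> (\<forall>y\<in>V. g w' y = g a (br b y))"
    have "w' - w = 0"
      by (rule ndV) (use w' wV w subspace_V in \<open>auto intro: subspace_diff\<close>)
    then show "w' = w" by simp
  qed
  then show ?thesis using w wV by simp
qed

lemma J_V[simp]: "J a b \<in> V" using J_both by blast
lemma J_char: "g (J a b) y = g a (br b y)" using J_both by blast

lemma J_add1: "J (a + a') b = J a b + J a' b" by (rule geq) (simp add: J_char)
lemma J_add2: "J a (b + b') = J a b + J a b'" by (rule geq) (simp add: J_char)
lemma J_scale1: "J (c *\<^sub>R a) b = c *\<^sub>R J a b" by (rule geq) (simp add: J_char)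
lemma J_scale2: "J a (c *\<^sub>R b) = c *\<^sub>R J a b" by (rule geq) (simp add: J_char)
lemma J_neg1: "J (- a) b = - J a b" by (rule geq) (simp add: J_char)
lemma J_neg2: "J a (- b) = - J a b" by (rule geq) (simp add: J_char)
lemma J_diff1: "J (a - a') b = J a b - J a' b" by (rule geq) (simp add: J_char)
lemma J_diff2: "J a (b - b') = J a b - J a b'" by (rule geq) (simp add: J_char)
lemma J_zero1: "J 0 b = 0" by (rule geq) (simp add: J_char)
lemma J_zero2: "J a 0 = 0" by (rule geq) (simp add: J_char)
lemmas J_simps[simp] = J_add1 J_add2 J_scale1 J_scale2 J_neg1 J_neg2 J_diff1 J_diff2 J_zero1 J_zero2

lemma J_Zarg[simp]: "b \<in> Z \<Longrightarrow> J a b = 0" by (rule geq) (simp add: J_char)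
lemma J_Varg[simp]: "a \<in> V \<Longrightarrow> J a b = 0"
  by (rule geq) (simp add: J_char inV)
lemma J_cong1: "(\<And>z. z \<in> Z \<Longrightarrow> g a z = g a' z) \<Longrightarrow> J a b = J a' b"
  by (rule geq) (simp add: J_char)

lemma lin_J2: "linear (J a)" by (rule linearI) simp_all
lemma lin_J1: "linear (\<lambda>a. J a b)" by (rule linearI) simp_all

lemma lc: "lc_conn g br x y = (1/2) *\<^sub>R (br x y - J x y - J y x)"
proof -
  define u0 where "u0 = (1/2) *\<^sub>R (br x y - J x y - J y x)"
  have key: "2 * g u0 w = g (br x y) w - g (br y w) x + g (br w x) y" for w
  proof -
    have "2 * g u0 w = g (br x y) w - g (J x y) w - g (J y x) w" unfolding u0_def by simp
    also have "\<dots> = g (br x y) w - g x (br y w) - g y (br x w)" by (simp add: J_char)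
    also have "\<dots> = g (br x y) w - g (br y w) x + g (br w x) y"
      using gsym[of x "br y w"] gsym[of y "br w x"] br_anti[of w x] by simp
    finally show ?thesis .
  qed
  have "lc_conn g br x y = u0"
    unfolding lc_conn_def
  proof (rule the_equality)
    show "\<forall>w. 2 * g u0 w = g (br x y) w - g (br y w) x + g (br w x) y" using key by blast
  next
    fix u assume u: "\<forall>w. 2 * g u w = g (br x y) w - g (br y w) x + g (br w x) y"
    show "u = u0"
    proof (rule geq)
      fix w have "2 * g u w = 2 * g u0 w" using u key[of w] by simp
      then show "g u w = g u0 w" by simp
    qed
  qed
  then show ?thesis unfolding u0_def .
qed

end

definition sol :: "('a::euclidean_space \<Rightarrow> 'a) \<Rightarrow> (real \<Rightarrow> 'a) \<Rightarrow> bool" where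
  "sol L \<phi> \<longleftrightarrow> (\<forall>t. (\<phi> has_vector_derivative L (\<phi> t)) (at t))"

lemma same_deriv:
  fixes f h :: "real \<Rightarrow> 'a::real_normed_vector"
  assumes "\<And>t. (f has_vector_derivative d t) (at t)" "\<And>t. (h has_vector_derivative d t) (at t)"
    and "f s0 = h s0"
  shows "f t = h t"
proof -
  have "((\<lambda>t. f t - h t) has_derivative (\<lambda>x. 0)) (at t within UNIV)" for t
  proof -
    have "((\<lambda>t. f t - h t) has_vector_derivative (d t - d t)) (at t)"
      using assms(1,2) by (intro derivative_intros) auto
    then show ?thesis by (simp add: has_vector_derivative_def)
  qed
  then obtain c where "\<forall>x\<in>UNIV. f x - h x = c"
    using has_derivative_zero_constant[of UNIV "\<lambda>t. f t - h t"] by auto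
  then have "f t - h t = f s0 - h s0" by auto
  then show ?thesis using assms(3) by simp
qed

lemma ode_zero:
  fixes L :: "'a::euclidean_space \<Rightarrow> 'a"
  assumes lin: "linear L" and s: "sol L \<phi>" and z: "\<phi> s0 = 0"
  shows "\<phi> t = 0"
proof -
  obtain C where C: "C > 0" "\<And>x. norm (L x) \<le> C * norm x" using linear_bounded_pos[OF lin] by blast
  define e where "e t = \<phi> t \<bullet> \<phi> t" for t
  have de: "(e has_real_derivative 2 * (\<phi> t \<bullet> L (\<phi> t))) (at t)" for t
  proof -
    have "((\<lambda>t. \<phi> t \<bullet> \<phi> t) has_vector_derivative (\<phi> t \<bullet> L (\<phi> t) + L (\<phi> t) \<bullet> \<phi> t)) (at t)"
      using s unfolding sol_def
      by (intro bounded_bilinear.has_vector_derivative[OF bounded_bilinear_inner]) auto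
    then show ?thesis unfolding e_def has_real_derivative_iff_has_vector_derivative
      by (simp add: inner_commute)
  qed
  have bnd: "\<bar>\<phi> t \<bullet> L (\<phi> t)\<bar> \<le> C * e t" for t
  proof -
    have "\<bar>\<phi> t \<bullet> L (\<phi> t)\<bar> \<le> norm (\<phi> t) * norm (L (\<phi> t))" by (rule Cauchy_Schwarz_ineq2)
    also have "\<dots> \<le> norm (\<phi> t) * (C * norm (\<phi> t))" by (rule mult_left_mono[OF C(2)]) simp
    also have "\<dots> = C * e t" unfolding e_def
      by (simp add: power2_norm_eq_inner[symmetric] power2_eq_square)
    finally show ?thesis .
  qed
  have e0: "e s0 = 0" using z unfolding e_def by simp
  have enn: "e t \<ge> 0" for t unfolding e_def by simp
  have "e t = 0"
  proof (cases "s0 \<le> t")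
    case True
    define h where "h t = e t * exp (-2*C*t)" for t
    have "h t \<le> h s0"
    proof (rule DERIV_nonpos_imp_nonincreasing[OF True])
      fix x
      have dx: "((\<lambda>x. exp (-2*C*x)) has_real_derivative exp (-2*C*x) * (-2*C)) (at x)"
        by (auto intro!: derivative_eq_intros)
      have "(h has_real_derivative (2 * (\<phi> x \<bullet> L (\<phi> x)) * exp (-2*C*x) + e x * (exp (-2*C*x) * (-2*C)))) (at x)"
        unfolding h_def by (rule DERIV_cong[OF DERIV_mult[OF de dx]]) (simp add: algebra_simps)
      moreover have "2 * (\<phi> x \<bullet> L (\<phi> x)) * exp (-2*C*x) + e x * (exp (-2*C*x) * (-2*C)) \<le> 0"
      proof -
        have "2 * (\<phi> x \<bullet> L (\<phi> x)) - 2*C*e x \<le> 0" using bnd[of x] by (simp add: abs_le_iff)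
        then have "(2 * (\<phi> x \<bullet> L (\<phi> x)) - 2*C*e x) * exp(-2*C*x) \<le> 0"
          by (simp add: mult_nonpos_nonneg)
        then show ?thesis by (simp add: algebra_simps)
      qed
      ultimately show "\<exists>y. DERIV h x :> y \<and> y \<le> 0" by blast
    qed
    then have "e t * exp(-2*C*t) \<le> 0" using e0 unfolding h_def by simp
    then have "e t \<le> 0" by (simp add: mult_le_0_iff)
    then show ?thesis using enn[of t] by simp
  next
    case False
    then have ts: "t \<le> s0" by simp
    define h where "h t = e t * exp (2*C*t)" for t
    have "h t \<le> h s0"
    proof (rule DERIV_nonneg_imp_nondecreasing[OF ts])
      fix x
      have dx: "((\<lambda>x. exp (2*C*x)) has_real_derivative exp (2*C*x) * (2*C)) (at x)"
        by (auto intro!: derivative_eq_intros)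
      have "(h has_real_derivative (2 * (\<phi> x \<bullet> L (\<phi> x)) * exp (2*C*x) + e x * (exp (2*C*x) * (2*C)))) (at x)"
        unfolding h_def by (rule DERIV_cong[OF DERIV_mult[OF de dx]]) (simp add: algebra_simps)
      moreover have "2 * (\<phi> x \<bullet> L (\<phi> x)) * exp (2*C*x) + e x * (exp (2*C*x) * (2*C)) \<ge> 0"
      proof -
        have "2 * (\<phi> x \<bullet> L (\<phi> x)) + 2*C*e x \<ge> 0" using bnd[of x] by (simp add: abs_le_iff)
        then have "(2 * (\<phi> x \<bullet> L (\<phi> x)) + 2*C*e x) * exp(2*C*x) \<ge> 0"
          by simp
        then show ?thesis by (simp add: algebra_simps)
      qed
      ultimately show "\<exists>y. DERIV h x :> y \<and> y \<ge> 0" by blast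
    qed
    then have "e t * exp(2*C*t) \<le> 0" using e0 unfolding h_def by simp
    then have "e t \<le> 0" by (simp add: mult_le_0_iff)
    then show ?thesis using enn[of t] by simp
  qed
  then show ?thesis unfolding e_def by simp
qed

lemma sol_add: "linear L \<Longrightarrow> sol L \<phi> \<Longrightarrow> sol L \<psi> \<Longrightarrow> sol L (\<lambda>t. \<phi> t + \<psi> t)"
  unfolding sol_def by (auto intro!: derivative_eq_intros simp: linear_add)

lemma sol_scale: "linear L \<Longrightarrow> sol L \<phi> \<Longrightarrow> sol L (\<lambda>t. c *\<^sub>R \<phi> t)"
  unfolding sol_def by (auto intro!: derivative_eq_intros simp: linear_scale)

lemma sol_diff: "linear L \<Longrightarrow> sol L \<phi> \<Longrightarrow> sol L \<psi> \<Longrightarrow> sol L (\<lambda>t. \<phi> t - \<psi> t)"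
  unfolding sol_def by (auto intro!: derivative_eq_intros simp: linear_diff)

lemma ode_unique:
  fixes L :: "'a::euclidean_space \<Rightarrow> 'a"
  assumes lin: "linear L" and "sol L \<phi>" "sol L \<psi>" "\<phi> s0 = \<psi> s0"
  shows "\<phi> t = \<psi> t"
  using ode_zero[OF lin sol_diff[OF lin assms(2,3)], of s0 t] assms(4) by simp

lemma sol_shift: "sol L \<phi> \<Longrightarrow> sol L (\<lambda>t. \<phi> (t + s))"
  unfolding sol_def
proof
  fix t assume "\<forall>t. (\<phi> has_vector_derivative L (\<phi> t)) (at t)"
  then have "(\<phi> has_vector_derivative L (\<phi> (t + s))) (at (t + s))" by blast
  moreover have d1: "((\<lambda>t. t + s) has_vector_derivative 1) (at t)"
    by (auto intro!: derivative_eq_intros)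
  ultimately show "((\<lambda>t. \<phi> (t + s)) has_vector_derivative L (\<phi> (t + s))) (at t)"
    using vector_diff_chain_at[OF d1] by (simp add: o_def)
qed

lemma sol_eig:
  fixes L :: "'a::euclidean_space \<Rightarrow> 'a"
  assumes lin: "linear L" and e: "L (L y) = (-(\<mu>^2)) *\<^sub>R y" and mu: "\<mu> \<noteq> 0"
  shows "sol L (\<lambda>s. cos (\<mu> * s) *\<^sub>R y + (sin (\<mu> * s) / \<mu>) *\<^sub>R L y)"
  unfolding sol_def
proof
  fix s
  have "L (cos (\<mu> * s) *\<^sub>R y + (sin (\<mu> * s) / \<mu>) *\<^sub>R L y) = (-(\<mu> * sin (\<mu> * s))) *\<^sub>R y + cos (\<mu> * s) *\<^sub>R L y"
    using mu by (simp add: linear_add[OF lin] linear_scale[OF lin] e power2_eq_square algebra_simps)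
  moreover have "((\<lambda>s. cos (\<mu> * s) *\<^sub>R y + (sin (\<mu> * s) / \<mu>) *\<^sub>R L y) has_vector_derivative
      ((-(\<mu> * sin (\<mu> * s))) *\<^sub>R y + cos (\<mu> * s) *\<^sub>R L y)) (at s)"
    using mu by (auto intro!: derivative_eq_intros simp: algebra_simps)
  ultimately show "((\<lambda>s. cos (\<mu> * s) *\<^sub>R y + (sin (\<mu> * s) / \<mu>) *\<^sub>R L y) has_vector_derivative
      L (cos (\<mu> * s) *\<^sub>R y + (sin (\<mu> * s) / \<mu>) *\<^sub>R L y)) (at s)" by simp
qed

lemma quad0:
  fixes b c :: real
  assumes h: "\<And>\<epsilon>. b*\<epsilon> + c*\<epsilon>^2 \<le> 0"
  shows "b = 0"
proof (rule ccontr)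
  assume b: "b \<noteq> 0"
  define d where "d = \<bar>c\<bar> + 1"
  have d: "d > 0" "d + c \<ge> 1" unfolding d_def by auto
  have "b*(b/d) + c*(b/d)^2 = (b/d)^2 * (d + c)"
    using d by (simp add: field_simps power2_eq_square)
  moreover have "(b/d)^2 * (d + c) > 0" using b d by (intro mult_pos_pos) auto
  ultimately show False using h[of "b/d"] by simp
qed

lemma rayleigh:
  fixes B :: "'a::euclidean_space \<Rightarrow> 'a \<Rightarrow> real" and S :: "'a \<Rightarrow> 'a"
  assumes Bb: "bilinear B" and Bs: "\<And>x y. B x y = B y x" and Bp: "\<And>x. x \<noteq> 0 \<Longrightarrow> B x x > 0"
    and R: "subspace R" and r: "r \<in> R" "r \<noteq> 0" and lS: "linear S"
    and SR: "\<And>y. y \<in> R \<Longrightarrow> S y \<in> R"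
    and Ssym: "\<And>y y'. y \<in> R \<Longrightarrow> y' \<in> R \<Longrightarrow> B (S y) y' = B y (S y')"
  shows "\<exists>y\<in>R. y \<noteq> 0 \<and> (\<exists>M. S y = M *\<^sub>R y)"
proof -
  define K where "K = R \<inter> sphere 0 1"
  have cK: "compact K" unfolding K_def
    by (intro closed_Int_compact closed_subspace[OF R] compact_sphere)
  have "(1 / norm r) *\<^sub>R r \<in> K" using r R unfolding K_def by (auto simp: subspace_scale)
  then have neK: "K \<noteq> {}" by auto
  define q where "q y = B (S y) y / B y y" for y
  have bb: "bounded_bilinear B" using Bb bilinear_conv_bounded_bilinear by blast
  have contS: "continuous_on UNIV S"
    using lS linear_continuous_on linear_conv_bounded_linear by blast
  have Knz: "y \<in> K \<Longrightarrow> B y y \<noteq> 0" for y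
  proof
    assume "y \<in> K" "B y y = 0"
    then have "y \<noteq> 0" unfolding K_def by auto
    then show False using Bp[of y] \<open>B y y = 0\<close> by simp
  qed
  have cq: "continuous_on K q" unfolding q_def
    by (intro continuous_on_divide bounded_bilinear.continuous_on[OF bb]
        continuous_on_compose2[OF contS] continuous_on_id) (use Knz in auto)
  obtain y0 where y0: "y0 \<in> K" "\<And>y. y \<in> K \<Longrightarrow> q y \<le> q y0"
    using continuous_attains_sup[OF cK neK cq] by blast
  define M where "M = q y0"
  have y0R: "y0 \<in> R" and y0nz: "y0 \<noteq> 0" using y0(1) unfolding K_def by auto
  have Bpos0: "B y0 y0 > 0" using Bp[OF y0nz] .
  have hom1: "B (S (c *\<^sub>R y)) (c *\<^sub>R y) = c^2 * B (S y) y" for c y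
    by (simp add: bilinear_lmul[OF Bb] bilinear_rmul[OF Bb] linear_scale[OF lS] power2_eq_square)
  have hom2: "B (c *\<^sub>R y) (c *\<^sub>R y) = c^2 * B y y" for c y
    by (simp add: bilinear_lmul[OF Bb] bilinear_rmul[OF Bb] power2_eq_square)
  have le: "B (S y) y \<le> M * B y y" if y: "y \<in> R" for y
  proof (cases "y = 0")
    case True then show ?thesis
      by (simp add: bilinear_lzero[OF Bb] bilinear_rzero[OF Bb] linear_0[OF lS])
  next
    case False
    let ?y = "(1/norm y) *\<^sub>R y"
    have "?y \<in> K" using y False R unfolding K_def by (auto simp: subspace_scale)
    then have "q ?y \<le> M" using y0 M_def by auto
    moreover have "q ?y = q y" unfolding q_def hom1 hom2 using False by simp
    ultimately have "B (S y) y / B y y \<le> M" unfolding q_def by simp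
    then show ?thesis using Bp[OF False] by (simp add: pos_divide_le_eq)
  qed
  have eqM: "B (S y0) y0 = M * B y0 y0" unfolding M_def q_def using Bpos0 by simp
  have orth: "B (S y0 - M *\<^sub>R y0) v = 0" if v: "v \<in> R" for v
  proof -
    define b where "b = 2 * (B (S y0) v - M * B y0 v)"
    define c where "c = B (S v) v - M * B v v"
    have "b*\<epsilon> + c*\<epsilon>^2 \<le> 0" for \<epsilon>
    proof -
      have "y0 + \<epsilon> *\<^sub>R v \<in> R" using y0R v R by (simp add: subspace_add subspace_scale)
      then have 1: "B (S (y0 + \<epsilon> *\<^sub>R v)) (y0 + \<epsilon> *\<^sub>R v) \<le> M * B (y0 + \<epsilon> *\<^sub>R v) (y0 + \<epsilon> *\<^sub>R v)"
        by (rule le)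
      have 2: "B (S (y0 + \<epsilon> *\<^sub>R v)) (y0 + \<epsilon> *\<^sub>R v)
          = B (S y0) y0 + \<epsilon> * (B (S y0) v + B (S v) y0) + \<epsilon>^2 * B (S v) v"
        by (simp add: linear_add[OF lS] linear_scale[OF lS] bilinear_ladd[OF Bb] bilinear_radd[OF Bb]
            bilinear_lmul[OF Bb] bilinear_rmul[OF Bb] algebra_simps power2_eq_square)
      have 3: "B (S v) y0 = B (S y0) v" using Ssym[OF v y0R] Bs by metis
      have 4: "B (y0 + \<epsilon> *\<^sub>R v) (y0 + \<epsilon> *\<^sub>R v) = B y0 y0 + 2 * \<epsilon> * B y0 v + \<epsilon>^2 * B v v"
        using Bs[of v y0]
        by (simp add: bilinear_ladd[OF Bb] bilinear_radd[OF Bb]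
            bilinear_lmul[OF Bb] bilinear_rmul[OF Bb] algebra_simps power2_eq_square)
      show ?thesis using 1 unfolding 2 3 4 b_def c_def using eqM by (simp add: algebra_simps)
    qed
    then have "b = 0" by (rule quad0)
    then show ?thesis unfolding b_def by (simp add: bilinear_lsub[OF Bb] bilinear_lmul[OF Bb])
  qed
  have "S y0 - M *\<^sub>R y0 \<in> R" using SR[OF y0R] y0R R by (simp add: subspace_diff subspace_scale)
  then have "B (S y0 - M *\<^sub>R y0) (S y0 - M *\<^sub>R y0) = 0" by (rule orth)
  then have "S y0 - M *\<^sub>R y0 = 0" using Bp[of "S y0 - M *\<^sub>R y0"] by (cases "S y0 - M *\<^sub>R y0 = 0") auto
  then show ?thesis using y0R y0nz by auto
qed

lemma bil_inner: "bilinear (inner :: 'a::euclidean_space \<Rightarrow> 'a \<Rightarrow> real)"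
  using bilinear_conv_bounded_bilinear bounded_bilinear_inner by blast

lemma lin_bounded: "linear (L :: 'a::euclidean_space \<Rightarrow> 'b::euclidean_space) \<Longrightarrow> bounded_linear L"
  using linear_conv_bounded_linear by blast

locale perset =
  fixes L :: "'a::euclidean_space \<Rightarrow> 'a" and f :: "real \<Rightarrow> 'a" and T :: real
  assumes lin: "linear L" and s: "sol L f" and T: "T > 0" and per: "f T = f 0"
begin

definition "U = span (range f)"

lemma subU: "subspace U" unfolding U_def by simp

lemma fper: "f (t + T) = f t"
  using ode_unique[OF lin sol_shift[OF s, of T] s, of 0 t] per by simp

lemma ex_sol: "x \<in> U \<Longrightarrow> \<exists>\<phi>. sol L \<phi> \<and> \<phi> 0 = x \<and> (\<forall>t. \<phi> (t + T) = \<phi> t)"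
  unfolding U_def
proof (erule span_induct)
  show "subspace {x. \<exists>\<phi>. sol L \<phi> \<and> \<phi> 0 = x \<and> (\<forall>t. \<phi> (t + T) = \<phi> t)}"
    unfolding subspace_def
  proof (intro conjI ballI allI)
    show "0 \<in> {x. \<exists>\<phi>. sol L \<phi> \<and> \<phi> 0 = x \<and> (\<forall>t. \<phi> (t + T) = \<phi> t)}"
      by (rule CollectI, rule exI[of _ "\<lambda>t. 0"]) (simp add: sol_def linear_0[OF lin])
  next
    fix x y assume "x \<in> {x. \<exists>\<phi>. sol L \<phi> \<and> \<phi> 0 = x \<and> (\<forall>t. \<phi> (t + T) = \<phi> t)}"
      "y \<in> {x. \<exists>\<phi>. sol L \<phi> \<and> \<phi> 0 = x \<and> (\<forall>t. \<phi> (t + T) = \<phi> t)}"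
    then obtain \<phi> \<psi> where "sol L \<phi>" "\<phi> 0 = x" "\<forall>t. \<phi> (t + T) = \<phi> t"
      "sol L \<psi>" "\<psi> 0 = y" "\<forall>t. \<psi> (t + T) = \<psi> t" by blast
    then show "x + y \<in> {x. \<exists>\<phi>. sol L \<phi> \<and> \<phi> 0 = x \<and> (\<forall>t. \<phi> (t + T) = \<phi> t)}"
      by (intro CollectI exI[of _ "\<lambda>t. \<phi> t + \<psi> t"]) (simp add: sol_add[OF lin])
  next
    fix c x assume "x \<in> {x. \<exists>\<phi>. sol L \<phi> \<and> \<phi> 0 = x \<and> (\<forall>t. \<phi> (t + T) = \<phi> t)}"
    then obtain \<phi> where "sol L \<phi>" "\<phi> 0 = x" "\<forall>t. \<phi> (t + T) = \<phi> t" by blast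
    then show "c *\<^sub>R x \<in> {x. \<exists>\<phi>. sol L \<phi> \<and> \<phi> 0 = x \<and> (\<forall>t. \<phi> (t + T) = \<phi> t)}"
      by (intro CollectI exI[of _ "\<lambda>t. c *\<^sub>R \<phi> t"]) (simp add: sol_scale[OF lin])
  qed
next
  fix x assume "x \<in> range f"
  then obtain t0 where x: "x = f t0" by blast
  show "\<exists>\<phi>. sol L \<phi> \<and> \<phi> 0 = x \<and> (\<forall>t. \<phi> (t + T) = \<phi> t)"
    using x fper[of "_ + t0"] sol_shift[OF s, of t0]
    by (intro exI[of _ "\<lambda>t. f (t + t0)"]) (simp add: algebra_simps)
qed

definition "pU x = (SOME p. p \<in> U \<and> (\<forall>y\<in>U. p \<bullet> y = x \<bullet> y))"

lemma pU_ex: "\<exists>p. p \<in> U \<and> (\<forall>y\<in>U. p \<bullet> y = x \<bullet> y)"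
proof -
  have nd: "\<And>z. z \<in> U \<Longrightarrow> (\<forall>y\<in>U. z \<bullet> y = 0) \<Longrightarrow> z = 0" by auto
  have "linear (inner x)" using bil_inner unfolding bilinear_def by blast
  then show ?thesis using riesz_sub[OF bil_inner subU nd] by blast
qed

lemma pU: "pU x \<in> U" "y \<in> U \<Longrightarrow> pU x \<bullet> y = x \<bullet> y"
  using someI_ex[OF pU_ex[of x]] unfolding pU_def by auto

lemma pU_uniq: assumes "p \<in> U" "\<And>y. y \<in> U \<Longrightarrow> p \<bullet> y = x \<bullet> y" shows "pU x = p"
proof -
  have d: "pU x - p \<in> U" using pU(1) assms(1) subU by (simp add: subspace_diff)
  have "(pU x - p) \<bullet> (pU x - p) = 0"
    using pU(2)[OF d] assms(2)[OF d] by (simp add: inner_diff_left)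
  then show ?thesis by simp
qed

lemma pU_add: "pU (x + y) = pU x + pU y"
  by (rule pU_uniq) (use pU subU in \<open>auto simp: subspace_add inner_add_left\<close>)
lemma pU_scale: "pU (c *\<^sub>R x) = c *\<^sub>R pU x"
  by (rule pU_uniq) (use pU subU in \<open>auto simp: subspace_scale\<close>)
lemma pU_id: "u \<in> U \<Longrightarrow> pU u = u"
  by (rule pU_uniq) auto
lemma lin_pU: "linear pU" by (rule linearI) (simp_all add: pU_add pU_scale)

definition "Q x = x - pU x"
lemma lin_Q: "linear Q" unfolding Q_def by (intro linear_compose_sub linear_ident lin_pU)
lemma Q0: "Q x = 0 \<longleftrightarrow> x \<in> U"
  unfolding Q_def using pU pU_id by (metis eq_iff_diff_eq_0)

lemma LfU: "L (f t) \<in> U"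
proof -
  have bQ: "bounded_linear Q" using lin_Q lin_bounded by blast
  have "((\<lambda>s. Q (f s)) has_vector_derivative Q (L (f t))) (at t)"
    using s unfolding sol_def by (intro bounded_linear.has_vector_derivative[OF bQ]) auto
  moreover have "(\<lambda>s. Q (f s)) = (\<lambda>s. 0)"
  proof (rule ext)
    fix s have "f s \<in> U" unfolding U_def by (rule span_base) simp
    then show "Q (f s) = 0" using Q0 by simp
  qed
  ultimately have "((\<lambda>s. 0) has_vector_derivative Q (L (f t))) (at t)" by simp
  then have "Q (L (f t)) = 0"
    using vector_derivative_unique_at[OF _ has_vector_derivative_const] by metis
  then show ?thesis using Q0 by simp
qed

lemma LU: "x \<in> U \<Longrightarrow> L x \<in> U"
proof -
  assume "x \<in> U"
  then have "L x \<in> L ` span (range f)" unfolding U_def by blast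
  also have "\<dots> = span (L ` range f)" using linear_span_image[OF lin] by simp
  also have "\<dots> \<subseteq> U" using LfU subU by (intro span_minimal) auto
  finally show "L x \<in> U" .
qed

definition "Sx u = (SOME \<phi>. sol L \<phi> \<and> \<phi> 0 = u \<and> (\<forall>t. \<phi> (t + T) = \<phi> t))"
definition "\<Phi> x = Sx (pU x)"

lemma \<Phi>: "sol L (\<Phi> x)" "\<Phi> x 0 = pU x" "\<Phi> x (t + T) = \<Phi> x t"
  using someI_ex[OF ex_sol[OF pU(1)[of x]]] unfolding \<Phi>_def Sx_def by auto

lemma \<Phi>_add: "\<Phi> (x + y) t = \<Phi> x t + \<Phi> y t"
  using ode_unique[OF lin \<Phi>(1) sol_add[OF lin \<Phi>(1) \<Phi>(1)], of "x + y" 0 x y t]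
  by (simp add: \<Phi>(2) pU_add)

lemma \<Phi>_scale: "\<Phi> (c *\<^sub>R x) t = c *\<^sub>R \<Phi> x t"
  using ode_unique[OF lin \<Phi>(1) sol_scale[OF lin \<Phi>(1)], of "c *\<^sub>R x" 0 c x t]
  by (simp add: \<Phi>(2) pU_scale)

lemma \<Phi>_L: assumes x: "x \<in> U" shows "\<Phi> (L x) t = L (\<Phi> x t)"
proof -
  have bL: "bounded_linear L" using lin lin_bounded by blast
  have "sol L (\<lambda>t. L (\<Phi> x t))"
    using \<Phi>(1)[of x] unfolding sol_def by (auto intro: bounded_linear.has_vector_derivative[OF bL])
  moreover have "\<Phi> (L x) 0 = L (\<Phi> x 0)" using x by (simp add: \<Phi>(2) pU_id LU)
  ultimately show ?thesis using ode_unique[OF lin \<Phi>(1)] by blast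
qed

lemma \<Phi>_nz: "pU x \<noteq> 0 \<Longrightarrow> \<Phi> x t \<noteq> 0"
  using ode_zero[OF lin \<Phi>(1), of x t 0] \<Phi>(2) by auto

lemma \<Phi>_cont: "continuous_on S (\<Phi> x)"
  using \<Phi>(1)[of x] unfolding sol_def
  by (meson continuous_at_imp_continuous_on has_vector_derivative_continuous)

lemma \<Phi>_int: "(\<lambda>s. \<Phi> x s \<bullet> \<Phi> y s) integrable_on {0..T}"
  by (intro integrable_continuous_interval continuous_on_inner \<Phi>_cont)

definition "B x y = integral {0..T} (\<lambda>s. \<Phi> x s \<bullet> \<Phi> y s) + Q x \<bullet> Q y"

lemma B_sym: "B x y = B y x" unfolding B_def by (simp add: inner_commute)

lemma B_add1: "B (x + x') y = B x y + B x' y"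
proof -
  have "integral {0..T} (\<lambda>s. \<Phi> (x + x') s \<bullet> \<Phi> y s)
      = integral {0..T} (\<lambda>s. \<Phi> x s \<bullet> \<Phi> y s + \<Phi> x' s \<bullet> \<Phi> y s)"
    by (simp add: \<Phi>_add inner_add_left)
  also have "\<dots> = integral {0..T} (\<lambda>s. \<Phi> x s \<bullet> \<Phi> y s) + integral {0..T} (\<lambda>s. \<Phi> x' s \<bullet> \<Phi> y s)"
    by (rule integral_add[OF \<Phi>_int \<Phi>_int])
  finally show ?thesis unfolding B_def
    by (simp add: linear_add[OF lin_Q] inner_add_left)
qed

lemma B_scale1: "B (c *\<^sub>R x) y = c * B x y"
proof -
  have "integral {0..T} (\<lambda>s. \<Phi> (c *\<^sub>R x) s \<bullet> \<Phi> y s) = integral {0..T} (\<lambda>s. c * (\<Phi> x s \<bullet> \<Phi> y s))"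
    by (simp add: \<Phi>_scale)
  also have "\<dots> = c * integral {0..T} (\<lambda>s. \<Phi> x s \<bullet> \<Phi> y s)"
    by (rule integral_mult[OF \<Phi>_int, symmetric])
  finally show ?thesis unfolding B_def
    by (simp add: linear_scale[OF lin_Q] algebra_simps)
qed

lemma B_bil: "bilinear B"
proof -
  have l1: "linear (\<lambda>x. B x y)" for y by (rule linearI) (simp_all add: B_add1 B_scale1)
  have l2: "linear (\<lambda>y. B x y)" for x
    by (rule linearI) (simp_all add: B_sym[of x] B_add1 B_scale1)
  show ?thesis unfolding bilinear_def using l1 l2 by blast
qed

lemma B_pos: assumes x: "x \<noteq> 0" shows "B x x > 0"
proof -
  have i0: "integral {0..T} (\<lambda>s. \<Phi> x s \<bullet> \<Phi> x s) \<ge> 0"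
    by (rule integral_nonneg[OF \<Phi>_int]) simp
  show ?thesis
  proof (cases "pU x = 0")
    case True
    then have "Q x = x" unfolding Q_def by simp
    then have "Q x \<bullet> Q x > 0" using x by simp
    then show ?thesis unfolding B_def using i0 by linarith
  next
    case False
    have c: "continuous_on {0..T} (\<lambda>s. \<Phi> x s \<bullet> \<Phi> x s)"
      by (intro continuous_on_inner \<Phi>_cont)
    obtain s0 where s0: "s0 \<in> {0..T}" "\<And>s. s \<in> {0..T} \<Longrightarrow> \<Phi> x s0 \<bullet> \<Phi> x s0 \<le> \<Phi> x s \<bullet> \<Phi> x s"
      using continuous_attains_inf[OF compact_Icc _ c] T by auto
    define m where "m = \<Phi> x s0 \<bullet> \<Phi> x s0"
    have m: "m > 0" unfolding m_def using \<Phi>_nz[OF False] by simp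
    have "integral {0..T} (\<lambda>s. m) \<le> integral {0..T} (\<lambda>s. \<Phi> x s \<bullet> \<Phi> x s)"
      by (rule integral_le[OF integrable_continuous_interval[OF continuous_on_const] \<Phi>_int])
        (use s0 m_def in auto)
    moreover have "integral {0..T} (\<lambda>s. m) = T * m" using T by simp
    moreover have "T * m > 0" using T m by simp
    moreover have "Q x \<bullet> Q x \<ge> 0" by simp
    ultimately show ?thesis unfolding B_def by linarith
  qed
qed

lemma B_skew: assumes x: "x \<in> U" and y: "y \<in> U" shows "B (L x) y + B x (L y) = 0"
proof -
  have Qs: "Q x = 0" "Q y = 0" "Q (L x) = 0" "Q (L y) = 0" using x y LU Q0 by auto
  have bL: "bounded_linear L" using lin lin_bounded by blast
  have d: "((\<lambda>s. \<Phi> x s \<bullet> \<Phi> y s) has_vector_derivative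
      (\<Phi> x s \<bullet> L (\<Phi> y s) + L (\<Phi> x s) \<bullet> \<Phi> y s)) (at s within {0..T})" for s
    using \<Phi>(1)[of x] \<Phi>(1)[of y] unfolding sol_def
    by (intro bounded_bilinear.has_vector_derivative[OF bounded_bilinear_inner])
      (auto intro: has_vector_derivative_at_within)
  have "((\<lambda>s. \<Phi> x s \<bullet> L (\<Phi> y s) + L (\<Phi> x s) \<bullet> \<Phi> y s) has_integral
       (\<Phi> x T \<bullet> \<Phi> y T - \<Phi> x 0 \<bullet> \<Phi> y 0)) {0..T}"
    using T by (intro fundamental_theorem_of_calculus d) auto
  moreover have "\<Phi> x T \<bullet> \<Phi> y T - \<Phi> x 0 \<bullet> \<Phi> y 0 = 0" using \<Phi>(3)[of x 0] \<Phi>(3)[of y 0] by simp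
  ultimately have I: "integral {0..T} (\<lambda>s. \<Phi> x s \<bullet> L (\<Phi> y s) + L (\<Phi> x s) \<bullet> \<Phi> y s) = 0"
    by (simp add: integral_unique)
  have "B (L x) y + B x (L y) = integral {0..T} (\<lambda>s. L (\<Phi> x s) \<bullet> \<Phi> y s)
        + integral {0..T} (\<lambda>s. \<Phi> x s \<bullet> L (\<Phi> y s))"
    unfolding B_def using Qs x y by (simp add: \<Phi>_L)
  also have "\<dots> = integral {0..T} (\<lambda>s. L (\<Phi> x s) \<bullet> \<Phi> y s + \<Phi> x s \<bullet> L (\<Phi> y s))"
    using integral_add[OF \<Phi>_int[of "L x" y] \<Phi>_int[of x "L y"]] x y by (simp add: \<Phi>_L)
  also have "\<dots> = 0" using I by (simp add: add.commute)
  finally show ?thesis .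
qed

end

context perset begin

definition "Ev = {y. \<exists>\<mu>>0. L (L y) = (-(\<mu>^2)) *\<^sub>R y \<and> (\<exists>k::int. \<mu> * T = 2 * pi * k)}"
definition "P = span ({y. L y = 0} \<union> Ev)"

lemma subP: "subspace P" unfolding P_def by simp

lemma LP: "x \<in> P \<Longrightarrow> L x \<in> P"
proof -
  assume "x \<in> P"
  then have "L x \<in> L ` span ({y. L y = 0} \<union> Ev)" unfolding P_def by blast
  also have "\<dots> = span (L ` ({y. L y = 0} \<union> Ev))" using linear_span_image[OF lin] by simp
  also have "\<dots> \<subseteq> P" unfolding P_def
  proof (rule span_mono, rule image_subsetI)
    fix y assume y: "y \<in> {y. L y = 0} \<union> Ev"
    show "L y \<in> {y. L y = 0} \<union> Ev"
    proof (cases "L y = 0")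
      case True then show ?thesis by (simp add: linear_0[OF lin])
    next
      case False
      then have "y \<in> Ev" using y by auto
      then obtain \<mu> k where "\<mu> > 0" "L (L y) = (-(\<mu>^2)) *\<^sub>R y" "\<mu> * T = 2 * pi * of_int k"
        unfolding Ev_def by blast
      then have "L y \<in> Ev" unfolding Ev_def
        by (intro CollectI exI[of _ \<mu>]) (auto simp: linear_scale[OF lin] linear_neg[OF lin])
      then show ?thesis by simp
    qed
  qed
  finally show "L x \<in> P" .
qed

lemma U_sub_P: "U \<subseteq> P"
proof (rule ccontr)
  assume "\<not> U \<subseteq> P"
  then obtain x where x: "x \<in> U" "x \<notin> P" by blast
  define PU where "PU = P \<inter> U"
  have sPU: "subspace PU" unfolding PU_def using subP subU by (rule subspace_inter)
  have nd: "\<And>z. z \<in> PU \<Longrightarrow> (\<forall>y\<in>PU. B z y = 0) \<Longrightarrow> z = 0"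
    using B_pos by (metis less_irrefl)
  have linBx: "linear (B x)" using B_bil unfolding bilinear_def by blast
  obtain p where p: "p \<in> PU" "\<forall>y\<in>PU. B p y = B x y"
    using riesz_sub[OF B_bil sPU nd linBx] by blast
  define r where "r = x - p"
  have rU: "r \<in> U" unfolding r_def using x p subU unfolding PU_def by (auto intro: subspace_diff)
  have rnz: "r \<noteq> 0" unfolding r_def using x p unfolding PU_def by auto
  define R where "R = {y \<in> U. \<forall>q\<in>PU. B y q = 0}"
  have rR: "r \<in> R" unfolding R_def r_def using rU[unfolded r_def] p
    by (simp add: bilinear_lsub[OF B_bil])
  have sR: "subspace R" unfolding R_def subspace_def using subU
    by (auto simp: bilinear_ladd[OF B_bil] bilinear_lmul[OF B_bil] bilinear_lzero[OF B_bil]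
        subspace_add subspace_scale subspace_0)
  have LR: "L y \<in> R" if y: "y \<in> R" for y
  proof -
    have yU: "y \<in> U" using y R_def by blast
    have "B (L y) q = 0" if q: "q \<in> PU" for q
    proof -
      have qU: "q \<in> U" and qP: "q \<in> P" using q PU_def by auto
      have "L q \<in> PU" unfolding PU_def using LP[OF qP] LU[OF qU] by simp
      then have "B y (L q) = 0" using y R_def by blast
      then show ?thesis using B_skew[OF yU qU] by simp
    qed
    then show ?thesis unfolding R_def using LU[OF yU] by blast
  qed
  have RU: "y \<in> R \<Longrightarrow> y \<in> U" for y using R_def by blast
  have Ssym: "B (L (L y)) y' = B y (L (L y'))" if "y \<in> R" "y' \<in> R" for y y'
  proof -
    have 1: "B (L (L y)) y' + B (L y) (L y') = 0" using B_skew[OF RU[OF LR[OF that(1)]] RU[OF that(2)]] .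
    have 2: "B (L y) (L y') + B y (L (L y')) = 0" using B_skew[OF RU[OF that(1)] RU[OF LR[OF that(2)]]] .
    from 1 2 show ?thesis by linarith
  qed
  have linLL: "linear (\<lambda>y. L (L y))" using linear_compose[OF lin lin] by (simp add: o_def)
  obtain y where y: "y \<in> R" "y \<noteq> 0" and "\<exists>M. L (L y) = M *\<^sub>R y"
    using rayleigh[OF B_bil B_sym B_pos sR rR rnz linLL LR[OF LR] Ssym] by blast
  then obtain M where yM: "L (L y) = M *\<^sub>R y" by blast
  have yU: "y \<in> U" using y RU by blast
  have Byy: "B y y > 0" using B_pos[OF y(2)] .
  have notPU: "y \<notin> PU"
  proof
    assume "y \<in> PU"
    then have "B y y = 0" using y(1) R_def by blast
    then show False using Byy by simp
  qed
  show False
  proof (cases "L y = 0")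
    case True
    then have "y \<in> P" unfolding P_def by (intro span_base) simp
    then show False using notPU yU PU_def by blast
  next
    case False
    have "B (L y) (L y) > 0" using B_pos[OF False] .
    moreover have "B (L y) (L y) + B y (L (L y)) = 0" using B_skew[OF yU LU[OF yU]] .
    ultimately have "M * B y y < 0" using yM by (simp add: bilinear_rmul[OF B_bil])
    then have Mneg: "M < 0" using Byy by (simp add: mult_less_0_iff)
    define \<mu> where "\<mu> = sqrt (- M)"
    have mu: "\<mu> > 0" "\<mu>^2 = - M" unfolding \<mu>_def using Mneg by auto
    have eig: "L (L y) = (-(\<mu>^2)) *\<^sub>R y" using yM mu by simp
    have solE: "sol L (\<lambda>s. cos (\<mu> * s) *\<^sub>R y + (sin (\<mu> * s) / \<mu>) *\<^sub>R L y)"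
      using sol_eig[OF lin eig] mu by simp
    have "\<Phi> y 0 = y" using \<Phi>(2) pU_id[OF yU] by simp
    then have Phiy: "\<Phi> y t = cos (\<mu> * t) *\<^sub>R y + (sin (\<mu> * t) / \<mu>) *\<^sub>R L y" for t
      using ode_unique[OF lin \<Phi>(1) solE, of y 0 t] by simp
    have "\<Phi> y T = \<Phi> y 0" using \<Phi>(3)[of y 0] by simp
    then have per: "cos (\<mu> * T) *\<^sub>R y + (sin (\<mu> * T) / \<mu>) *\<^sub>R L y = y" using Phiy[of T] Phiy[of 0] by simp
    have BLy: "B (L y) y = 0" using B_skew[OF yU yU] B_sym[of y "L y"] by simp
    have "B (cos (\<mu> * T) *\<^sub>R y + (sin (\<mu> * T) / \<mu>) *\<^sub>R L y) y = B y y" using per by simp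
    then have "cos (\<mu> * T) * B y y = B y y"
      using BLy by (simp add: bilinear_ladd[OF B_bil] bilinear_lmul[OF B_bil])
    then have "cos (\<mu> * T) = 1" using Byy by simp
    then obtain n :: int where n: "\<mu> * T = real_of_int n * 2 * pi" using cos_one_2pi_int by blast
    have "y \<in> Ev" unfolding Ev_def using eig mu n
      by (intro CollectI exI[of _ \<mu>]) (auto intro!: exI[of _ n] simp: algebra_simps)
    then have "y \<in> P" unfolding P_def by (intro span_base) simp
    then show False using notPU yU PU_def by blast
  qed
qed

lemma f0P: "f 0 \<in> P"
proof -
  have "f 0 \<in> U" unfolding U_def by (rule span_base) simp
  then show ?thesis using U_sub_P by blast
qed

end

lemma periodic_decomp:
  fixes L :: "'a::euclidean_space \<Rightarrow> 'a" and f :: "real \<Rightarrow> 'a"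
  assumes "linear L" "sol L f" "T > 0" "f T = f 0"
  shows "f 0 \<in> span ({y. L y = 0} \<union>
     {y. \<exists>\<mu>>0. L (L y) = (-(\<mu>^2)) *\<^sub>R y \<and> (\<exists>k::int. \<mu> * T = 2 * pi * k)})"
proof -
  interpret perset L f T by (rule perset.intro[OF assms])
  show ?thesis using f0P unfolding P_def Ev_def .
qed

interpretation fs: vector_space "(\<lambda>r f t. r *\<^sub>R f t) :: real \<Rightarrow> (real \<Rightarrow> 'a::real_vector) \<Rightarrow> real \<Rightarrow> 'a"
  by unfold_locales (auto simp: fun_eq_iff algebra_simps)

interpretation fpair: finite_dimensional_vector_space_pair_1
  "scaleR :: real \<Rightarrow> 'b::euclidean_space \<Rightarrow> 'b" Basis
  "(\<lambda>r f t. r *\<^sub>R f t) :: real \<Rightarrow> (real \<Rightarrow> 'a::real_vector) \<Rightarrow> real \<Rightarrow> 'a"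
  rewrites "module.dependent (*\<^sub>R) = dependent"
    and "module.span (*\<^sub>R) = span"
    and "module.subspace (*\<^sub>R) = subspace"
    and "vector_space.dim (*\<^sub>R) = dim"
  by unfold_locales (auto simp add: dependent_raw_def span_raw_def subspace_raw_def dim_raw_def)

lemma dim_transfer:
  fixes JS :: "(real \<Rightarrow> 'a::euclidean_space) set" and W :: "'b::euclidean_space set"
    and D :: "(real \<Rightarrow> 'a) \<Rightarrow> 'b"
  assumes W: "subspace W"
    and J0: "(\<lambda>t. 0) \<in> JS"
    and Jadd: "\<And>Y Z. Y \<in> JS \<Longrightarrow> Z \<in> JS \<Longrightarrow> (\<lambda>t. Y t + Z t) \<in> JS"
    and Jscale: "\<And>Y c. Y \<in> JS \<Longrightarrow> (\<lambda>t. c *\<^sub>R Y t) \<in> JS"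
    and Dadd: "\<And>Y Z. Y \<in> JS \<Longrightarrow> Z \<in> JS \<Longrightarrow> D (\<lambda>t. Y t + Z t) = D Y + D Z"
    and Dscale: "\<And>Y c. Y \<in> JS \<Longrightarrow> D (\<lambda>t. c *\<^sub>R Y t) = c *\<^sub>R D Y"
    and img: "D ` JS = W" and inj: "inj_on D JS"
  shows "vector_space.dim (\<lambda>(r::real) (f::real \<Rightarrow> 'a). (\<lambda>t. r *\<^sub>R f t)) JS = dim W"
proof -
  obtain Bs where Bs: "Bs \<subseteq> W" "independent Bs" "W \<subseteq> span Bs" "card Bs = dim W"
    using basis_exists by blast
  have spB: "span Bs = W" using Bs W by (metis span_eq_iff span_mono subset_antisym)
  define \<psi>0 where "\<psi>0 b = (SOME Y. Y \<in> JS \<and> D Y = b)" for b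
  have \<psi>0: "b \<in> W \<Longrightarrow> \<psi>0 b \<in> JS \<and> D (\<psi>0 b) = b" for b
    unfolding \<psi>0_def using img by (metis (mono_tags, lifting) imageE someI_ex)
  define \<psi> where "\<psi> = fpair.construct Bs \<psi>0"
  have lin: "Vector_Spaces.linear scaleR (\<lambda>r f t. r *\<^sub>R f t) \<psi>"
    unfolding \<psi>_def by (rule fpair.linear_construct[OF Bs(2)])
  interpret lin: Vector_Spaces.linear scaleR "(\<lambda>r f t. r *\<^sub>R f t) :: real \<Rightarrow> (real \<Rightarrow> 'a) \<Rightarrow> real \<Rightarrow> 'a" \<psi>
    by (rule lin)
  have key: "\<psi> w \<in> JS \<and> D (\<psi> w) = w" if w: "w \<in> W" for w
  proof -
    have wB: "w \<in> span Bs" using w spB by simp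
    have bs: "\<psi> x \<in> JS \<and> D (\<psi> x) = x" if "x \<in> Bs" for x
    proof -
      have "fpair.construct Bs \<psi>0 x = \<psi>0 x" by (rule fpair.construct_basis[OF Bs(2) that])
      then show ?thesis unfolding \<psi>_def using \<psi>0 Bs(1) that by auto
    qed
    have sub: "subspace {x. \<psi> x \<in> JS \<and> D (\<psi> x) = x}" unfolding subspace_def
    proof (intro conjI ballI allI)
      have "\<psi> 0 = (\<lambda>t. 0)" using lin.zero by (simp add: zero_fun_def)
      moreover have "D (\<lambda>t. 0) = 0"
        using Dscale[OF J0, of 0] by simp
      ultimately show "0 \<in> {x. \<psi> x \<in> JS \<and> D (\<psi> x) = x}" using J0 by auto
    next
      fix x y assume "x \<in> {x. \<psi> x \<in> JS \<and> D (\<psi> x) = x}" "y \<in> {x. \<psi> x \<in> JS \<and> D (\<psi> x) = x}"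
      moreover have "\<psi> (x + y) = (\<lambda>t. \<psi> x t + \<psi> y t)" using lin.add by (simp add: plus_fun_def)
      ultimately show "x + y \<in> {x. \<psi> x \<in> JS \<and> D (\<psi> x) = x}" using Jadd Dadd by auto
    next
      fix c x assume "x \<in> {x. \<psi> x \<in> JS \<and> D (\<psi> x) = x}"
      moreover have "\<psi> (c *\<^sub>R x) = (\<lambda>t. c *\<^sub>R \<psi> x t)" using lin.scale by simp
      ultimately show "c *\<^sub>R x \<in> {x. \<psi> x \<in> JS \<and> D (\<psi> x) = x}" using Jscale Dscale by auto
    qed
    show ?thesis using span_induct[of w Bs "\<lambda>x. \<psi> x \<in> JS \<and> D (\<psi> x) = x", OF wB sub bs] by simp
  qed
  have im: "\<psi> ` W = JS"
  proof
    show "\<psi> ` W \<subseteq> JS" using key by auto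
    show "JS \<subseteq> \<psi> ` W"
    proof
      fix Y assume Y: "Y \<in> JS"
      then have DY: "D Y \<in> W" using img by auto
      have "\<psi> (D Y) \<in> JS" "D (\<psi> (D Y)) = D Y" using key[OF DY] by auto
      then have "\<psi> (D Y) = Y" using inj Y by (meson inj_onD)
      then show "Y \<in> \<psi> ` W" using DY by force
    qed
  qed
  have injp: "inj_on \<psi> (span W)"
  proof (rule inj_onI)
    fix x y assume "x \<in> span W" "y \<in> span W" and e: "\<psi> x = \<psi> y"
    moreover have "span W = W" using W by (simp add: span_eq_iff)
    ultimately have "x \<in> W" "y \<in> W" by auto
    then have "x = D (\<psi> x)" "y = D (\<psi> y)" using key by auto
    then show "x = y" using e by simp
  qed
  have "vector_space.dim (\<lambda>(r::real) (f::real \<Rightarrow> 'a). (\<lambda>t. r *\<^sub>R f t)) (\<psi> ` W) = dim W"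
    by (rule fpair.dim_image_eq[OF lin injp])
  then show ?thesis using im by simp
qed

lemma subspace_eig: "linear T \<Longrightarrow> subspace {x. T x = (l::real) *\<^sub>R x}"
  unfolding subspace_def by (auto simp: linear_add linear_scale linear_0 algebra_simps)

lemma eig_zero:
  fixes T :: "'a::euclidean_space \<Rightarrow> 'a"
  assumes lin: "linear T" and fin: "finite K"
  shows "k \<notin> K \<Longrightarrow> x \<in> span (\<Union>l\<in>K. {x. T x = l *\<^sub>R x}) \<Longrightarrow> T x = k *\<^sub>R x \<Longrightarrow> x = 0"
  using fin
proof (induction K arbitrary: x)
  case empty
  then show ?case by simp
next
  case (insert j K)
  have "x \<in> span ({x. T x = j *\<^sub>R x} \<union> (\<Union>l\<in>K. {x. T x = l *\<^sub>R x}))"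
    using insert.prems(2) by (simp add: Un_commute)
  then obtain a b where ab: "x = a + b" "a \<in> span {x. T x = j *\<^sub>R x}"
      "b \<in> span (\<Union>l\<in>K. {x. T x = l *\<^sub>R x})"
    unfolding span_Un by blast
  have spE: "span {x. T x = j *\<^sub>R x} = {x. T x = j *\<^sub>R x}" by (rule span_eq_iff[THEN iffD2, OF subspace_eig[OF lin]])
  have a: "T a = j *\<^sub>R a" using ab(2) spE by (simp del: span_eq_iff)
  define M where "M y = T y - j *\<^sub>R y" for y
  have linM: "linear M" unfolding M_def by (intro linear_compose_sub lin linear_compose_scale_right linear_ident)
  have "M b \<in> M ` span (\<Union>l\<in>K. {x. T x = l *\<^sub>R x})" using ab(3) by blast
  also have "\<dots> = span (M ` (\<Union>l\<in>K. {x. T x = l *\<^sub>R x}))" using linear_span_image[OF linM] by simp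
  also have "\<dots> \<subseteq> span (\<Union>l\<in>K. {x. T x = l *\<^sub>R x})"
  proof (rule span_mono, rule image_subsetI)
    fix y assume "y \<in> (\<Union>l\<in>K. {x. T x = l *\<^sub>R x})"
    then obtain l where l: "l \<in> K" "T y = l *\<^sub>R y" by blast
    have "T (M y) = l *\<^sub>R M y" unfolding M_def using l(2)
      by (simp add: linear_diff[OF lin] linear_scale[OF lin] algebra_simps)
    then show "M y \<in> (\<Union>l\<in>K. {x. T x = l *\<^sub>R x})" using l(1) by blast
  qed
  finally have Mb: "M b \<in> span (\<Union>l\<in>K. {x. T x = l *\<^sub>R x})" .
  have Ma: "M a = 0" unfolding M_def using a by simp
  have "M x = (k - j) *\<^sub>R x" unfolding M_def using insert.prems(3) by (simp add: algebra_simps)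
  moreover have "M x = M b" using ab(1) Ma linear_add[OF linM] by simp
  ultimately have Mbx: "M b = (k - j) *\<^sub>R x" by simp
  have "T (M b) = k *\<^sub>R M b" unfolding Mbx using insert.prems(3)
    by (simp add: linear_scale[OF lin])
  then have "M b = 0" using insert.IH[OF _ Mb] insert.prems(1) by simp
  then have "(k - j) *\<^sub>R x = 0" using Mbx by simp
  moreover have "k \<noteq> j" using insert.prems(1) by simp
  ultimately show ?case by simp
qed

lemma eig_dim:
  fixes T :: "'a::euclidean_space \<Rightarrow> 'a"
  assumes lin: "linear T" and fin: "finite K"
  shows "dim (span (\<Union>l\<in>K. {x. T x = l *\<^sub>R x})) = (\<Sum>l\<in>K. dim {x. T x = l *\<^sub>R x})"
  using fin
proof (induction K)
  case empty
  then show ?case by simp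
next
  case (insert k K)
  let ?E = "{x. T x = k *\<^sub>R x}" and ?S = "span (\<Union>l\<in>K. {x. T x = l *\<^sub>R x})"
  have sE: "subspace ?E" by (rule subspace_eig[OF lin])
  have "span (\<Union>l\<in>insert k K. {x. T x = l *\<^sub>R x}) = span (?E \<union> (\<Union>l\<in>K. {x. T x = l *\<^sub>R x}))"
    by simp
  also have "\<dots> = {a + b |a b. a \<in> ?E \<and> b \<in> ?S}" unfolding span_Un span_eq_iff[THEN iffD2, OF sE] ..
  finally have eq: "span (\<Union>l\<in>insert k K. {x. T x = l *\<^sub>R x}) = {a + b |a b. a \<in> ?E \<and> b \<in> ?S}" .
  have int: "?E \<inter> ?S = {0}"
  proof
    show "?E \<inter> ?S \<subseteq> {0}" using eig_zero[OF lin insert.hyps(1) insert.hyps(2)] by blast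
    show "{0} \<subseteq> ?E \<inter> ?S" using span_zero by (auto simp: linear_0[OF lin])
  qed
  have "dim {a + b |a b. a \<in> ?E \<and> b \<in> ?S} + dim (?E \<inter> ?S) = dim ?E + dim ?S"
    by (rule dim_sums_Int[OF sE subspace_span])
  then have "dim (span (\<Union>l\<in>insert k K. {x. T x = l *\<^sub>R x})) = dim ?E + dim ?S"
    unfolding eq int by simp
  then show ?case using insert by simp
qed

context nset begin

lemma lin_lc2: "linear (lc_conn g br x)"
  by (rule linearI) (simp_all add: lc algebra_simps)

lemma jac_const:
  assumes c: "\<And>t. c t = c0"
  shows "jacobi_field g br c Y \<longleftrightarrow> (\<exists>Y1 Y2. \<forall>t. (Y has_vector_derivative Y1 t) (at t) \<and>
      (Y1 has_vector_derivative Y2 t) (at t) \<and>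
      Y2 t + 2 *\<^sub>R lc_conn g br c0 (Y1 t) + lc_conn g br c0 (lc_conn g br c0 (Y t))
        + curv g br (Y t) c0 c0 = 0)"
proof -
  let ?N = "lc_conn g br c0"
  have bN: "bounded_linear ?N" using lin_lc2 lin_bounded by blast
  have lN: "linear ?N" by (rule lin_lc2)
  show ?thesis
  proof
    assume "jacobi_field g br c Y"
    then obtain Y1 W1 where h: "\<And>t. (Y has_vector_derivative Y1 t) (at t)"
      "\<And>t. ((\<lambda>s. Y1 s + ?N (Y s)) has_vector_derivative W1 t) (at t)"
      "\<And>t. W1 t + ?N (Y1 t + ?N (Y t)) + curv g br (Y t) c0 c0 = 0"
      unfolding jacobi_field_def c by blast
    define Y2 where "Y2 t = W1 t - ?N (Y1 t)" for t
    have d: "(Y1 has_vector_derivative Y2 t) (at t)" for t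
    proof -
      have "((\<lambda>s. ?N (Y s)) has_vector_derivative ?N (Y1 t)) (at t)"
        by (rule bounded_linear.has_vector_derivative[OF bN h(1)])
      from has_vector_derivative_diff[OF h(2) this] show ?thesis unfolding Y2_def by simp
    qed
    have e: "Y2 t + 2 *\<^sub>R ?N (Y1 t) + ?N (?N (Y t)) + curv g br (Y t) c0 c0 = 0" for t
      using h(3)[of t] unfolding Y2_def by (simp add: linear_add[OF lN] scaleR_2 algebra_simps)
    show "\<exists>Y1 Y2. \<forall>t. (Y has_vector_derivative Y1 t) (at t) \<and>
      (Y1 has_vector_derivative Y2 t) (at t) \<and>
      Y2 t + 2 *\<^sub>R ?N (Y1 t) + ?N (?N (Y t)) + curv g br (Y t) c0 c0 = 0"
      using h(1) d e by blast
  next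
    assume "\<exists>Y1 Y2. \<forall>t. (Y has_vector_derivative Y1 t) (at t) \<and>
      (Y1 has_vector_derivative Y2 t) (at t) \<and>
      Y2 t + 2 *\<^sub>R ?N (Y1 t) + ?N (?N (Y t)) + curv g br (Y t) c0 c0 = 0"
    then obtain Y1 Y2 where h: "\<And>t. (Y has_vector_derivative Y1 t) (at t)"
      "\<And>t. (Y1 has_vector_derivative Y2 t) (at t)"
      "\<And>t. Y2 t + 2 *\<^sub>R ?N (Y1 t) + ?N (?N (Y t)) + curv g br (Y t) c0 c0 = 0" by blast
    have d: "((\<lambda>s. Y1 s + ?N (Y s)) has_vector_derivative (Y2 t + ?N (Y1 t))) (at t)" for t
      by (intro has_vector_derivative_add h(2) bounded_linear.has_vector_derivative[OF bN h(1)])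
    have e: "(Y2 t + ?N (Y1 t)) + ?N (Y1 t + ?N (Y t)) + curv g br (Y t) c0 c0 = 0" for t
      using h(3)[of t] by (simp add: linear_add[OF lN] scaleR_2 algebra_simps)
    show "jacobi_field g br c Y" unfolding jacobi_field_def c
      by (intro exI[of _ Y1] exI[of _ "\<lambda>t. Y2 t + ?N (Y1 t)"]) (use h(1) d e in blast)
  qed
qed

lemma geo_const:
  assumes z0: "z0 \<in> Z" and x0: "x0 \<in> V" and geo: "geodesic_velocity g br c"
    and init: "c 0 = z0 + x0" and J0: "J z0 (z0 + x0) = 0"
  shows "c t = z0 + x0"
proof -
  have e: "- lc_conn g br (c t) (c t) = J (c t) (c t)" for t
  proof -
    have "- lc_conn g br (c t) (c t) = - ((1/2) *\<^sub>R (- J (c t) (c t) - J (c t) (c t)))" by (simp add: lc)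
    also have "\<dots> = J (c t) (c t)" by (simp add: algebra_simps flip: scaleR_2)
    finally show ?thesis .
  qed
  have cd: "(c has_vector_derivative J (c t) (c t)) (at t)" for t
    using geo e unfolding geodesic_velocity_def by metis
  have gz: "g (c t) z = g z0 z" if z: "z \<in> Z" for t z
  proof -
    have bl: "bounded_linear (\<lambda>x. g x z)"
      using gbil lin_bounded unfolding bilinear_def by blast
    have "((\<lambda>t. g (c t) z) has_vector_derivative g (J (c t) (c t)) z) (at t)" for t
      by (rule bounded_linear.has_vector_derivative[OF bl cd])
    moreover have "g (J (c t) (c t)) z = 0" for t using J_V z unfolding inV by blast
    ultimately have "((\<lambda>t. g (c t) z) has_vector_derivative 0) (at t)" for t by simp
    moreover have "((\<lambda>t. g z0 z) has_vector_derivative 0) (at t)" for t by simp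
    moreover have "g (c 0) z = g z0 z" using init x0 z unfolding inV by simp
    ultimately show ?thesis using same_deriv[of "\<lambda>t. g (c t) z" "\<lambda>t. 0" "\<lambda>t. g z0 z" 0 t] by blast
  qed
  have Jc: "J (c t) b = J z0 b" for t b by (rule J_cong1) (use gz in auto)
  have s1: "sol (J z0) c" unfolding sol_def using cd Jc by simp
  have s2: "sol (J z0) (\<lambda>t. z0 + x0)" unfolding sol_def using J0 by simp
  show ?thesis using ode_unique[OF lin_J2 s1 s2, of 0 t] init by simp
qed

lemma jac3:
  assumes z0: "z0 \<in> Z" and c: "\<And>t. c t = z0"
  shows "jacobi_field g br c Y \<longleftrightarrow> (\<exists>Y1. (\<forall>t. (Y has_vector_derivative Y1 t) (at t)) \<and> sol (J z0) Y1)"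
proof -
  have N: "lc_conn g br z0 y = (-(1/2)) *\<^sub>R J z0 y" for y using z0 by (simp add: lc)
  have R: "curv g br y z0 z0 = (-(1/4)) *\<^sub>R J z0 (J z0 y)" for y
  proof -
    have 1: "lc_conn g br z0 z0 = 0" using N[of z0] z0 by simp
    have 2: "lc_conn g br y 0 = 0" by (simp add: lc)
    have 3: "lc_conn g br y z0 = (-(1/2)) *\<^sub>R J z0 y" using z0 by (simp add: lc)
    have 4: "lc_conn g br 0 z0 = 0" by (simp add: lc)
    show ?thesis unfolding curv_def 1 2 3 using z0 by (simp add: N 4)
  qed
  have eq: "Y2 + 2 *\<^sub>R lc_conn g br z0 Y1 + lc_conn g br z0 (lc_conn g br z0 Y0) + curv g br Y0 z0 z0 = 0
      \<longleftrightarrow> Y2 = J z0 Y1" for Y0 Y1 Y2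
    by (simp add: N R)
  show ?thesis unfolding jac_const[OF c] eq sol_def
  proof
    assume "\<exists>Y1 Y2. \<forall>t. (Y has_vector_derivative Y1 t) (at t) \<and> (Y1 has_vector_derivative Y2 t) (at t) \<and> Y2 t = J z0 (Y1 t)"
    then obtain Y1 Y2 where "\<forall>t. (Y has_vector_derivative Y1 t) (at t) \<and> (Y1 has_vector_derivative Y2 t) (at t) \<and> Y2 t = J z0 (Y1 t)" by blast
    then show "\<exists>Y1. (\<forall>t. (Y has_vector_derivative Y1 t) (at t)) \<and> (\<forall>t. (Y1 has_vector_derivative J z0 (Y1 t)) (at t))"
      by (intro exI[of _ Y1]) metis
  next
    assume "\<exists>Y1. (\<forall>t. (Y has_vector_derivative Y1 t) (at t)) \<and> (\<forall>t. (Y1 has_vector_derivative J z0 (Y1 t)) (at t))"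
    then obtain Y1 where "(\<forall>t. (Y has_vector_derivative Y1 t) (at t)) \<and> (\<forall>t. (Y1 has_vector_derivative J z0 (Y1 t)) (at t))" by blast
    then show "\<exists>Y1 Y2. \<forall>t. (Y has_vector_derivative Y1 t) (at t) \<and> (Y1 has_vector_derivative Y2 t) (at t) \<and> Y2 t = J z0 (Y1 t)"
      by (intro exI[of _ Y1] exI[of _ "\<lambda>t. J z0 (Y1 t)"]) auto
  qed
qed

lemma jac2:
  assumes z0: "z0 \<in> Z" and x0: "x0 \<in> V" and Jz0: "\<And>b. J z0 b = 0" and c: "\<And>t. c t = z0 + x0"
  shows "jacobi_field g br c Y \<longleftrightarrow> (\<exists>Y1 Y2. \<forall>t. (Y has_vector_derivative Y1 t) (at t) \<and>
      (Y1 has_vector_derivative Y2 t) (at t) \<and>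
      Y2 t + br x0 (Y1 t) - J (Y1 t) x0 - J (br x0 (Y t)) x0 = 0)"
proof -
  define c0 where "c0 = z0 + x0"
  have N: "lc_conn g br c0 y = (1/2) *\<^sub>R (br x0 y - J y x0)" for y
    unfolding c0_def using z0 x0 by (simp add: lc Jz0)
  have BB: "br x0 (br x0 y) = 0" for y by simp
  have KK: "J (J y x0) x0 = 0" for y by simp
  have R: "curv g br y c0 c0 = (1/4) *\<^sub>R br x0 (J y x0) - (3/4) *\<^sub>R J (br x0 y) x0" for y
  proof -
    have 1: "lc_conn g br c0 c0 = 0" unfolding N unfolding c0_def using z0 x0 by (simp add: Jz0)
    have 2: "lc_conn g br y 0 = 0" by (simp add: lc)
    have 3: "lc_conn g br y c0 = (1/2) *\<^sub>R (br y x0 - J y x0)"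
      unfolding c0_def using z0 x0 by (simp add: lc Jz0)
    have 4: "br y c0 = br y x0" unfolding c0_def using z0 by simp
    have 5: "lc_conn g br (br y x0) c0 = (-(1/2)) *\<^sub>R J (br y x0) x0"
      unfolding c0_def using z0 x0 by (simp add: lc Jz0)
    have 6: "br y x0 = - br x0 y" by (rule br_anti)
    show ?thesis unfolding curv_def 1 2 3 4 5 unfolding N using BB KK
      by (simp add: 6 algebra_simps) (simp flip: scaleR_add_left)
  qed
  have eq: "Y2 + 2 *\<^sub>R lc_conn g br c0 Y1 + lc_conn g br c0 (lc_conn g br c0 Y0) + curv g br Y0 c0 c0 = 0
      \<longleftrightarrow> Y2 + br x0 Y1 - J Y1 x0 - J (br x0 Y0) x0 = 0" for Y0 Y1 Y2
  proof -
    have "Y2 + 2 *\<^sub>R lc_conn g br c0 Y1 + lc_conn g br c0 (lc_conn g br c0 Y0) + curv g br Y0 c0 c0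
        = Y2 + br x0 Y1 - J Y1 x0 - J (br x0 Y0) x0"
      unfolding N R using BB KK by (simp add: algebra_simps) (simp flip: scaleR_add_left)
    then show ?thesis by metis
  qed
  show ?thesis unfolding c0_def[symmetric] jac_const[OF c[unfolded c0_def[symmetric]]] eq ..
qed

end

locale case2 = nset br g for br :: "'n::euclidean_space \<Rightarrow> 'n \<Rightarrow> 'n" and g +
  fixes z0 x0 :: 'n and c :: "real \<Rightarrow> 'n"
  assumes z0: "z0 \<in> lie_center br" and x0: "x0 \<in> vpart g br"
    and Jz0: "\<And>b. Jmap g br z0 b = 0"
    and geo: "geodesic_velocity g br c" and init: "c 0 = z0 + x0"
begin

lemma cc: "c t = z0 + x0"
  by (rule geo_const[OF z0 x0 geo init]) (simp add: Jz0)

abbreviation "Bo y \<equiv> br x0 y"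
abbreviation "Ko y \<equiv> J y x0"
abbreviation "Ao y \<equiv> br x0 (J y x0)"

definition "Yp a t = t *\<^sub>R a + (t^2/2) *\<^sub>R (Ko a - Bo a) - (t^3/6) *\<^sub>R Ao a"
definition "Y1p a t = a + t *\<^sub>R (Ko a - Bo a) - (t^2/2) *\<^sub>R Ao a"

lemma Yp_d: "(Yp a has_vector_derivative Y1p a t) (at t)"
  unfolding Yp_def Y1p_def
  by (auto intro!: derivative_eq_intros simp: field_simps power2_eq_square power3_eq_cube)

lemma Y1p_d: "(Y1p a has_vector_derivative ((Ko a - Bo a) - t *\<^sub>R Ao a)) (at t)"
  unfolding Y1p_def
  by (auto intro!: derivative_eq_intros simp: field_simps power2_eq_square)

lemma Yp_jac: "jacobi_field g br c (Yp a)"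
  unfolding jac2[OF z0 x0 Jz0 cc]
  apply (rule exI[of _ "Y1p a"], rule exI[of _ "\<lambda>t. (Ko a - Bo a) - t *\<^sub>R Ao a"])
  using Yp_d Y1p_d by (simp add: Yp_def Y1p_def algebra_simps)

lemma jac_form:
  assumes jY: "jacobi_field g br c Y" and Y0: "Y 0 = 0"
  shows "Y = Yp (vector_derivative Y (at 0))"
proof -
  obtain Y1 Y2 where h: "\<And>t. (Y has_vector_derivative Y1 t) (at t)"
    "\<And>t. (Y1 has_vector_derivative Y2 t) (at t)"
    "\<And>t. Y2 t + Bo (Y1 t) - Ko (Y1 t) - J (Bo (Y t)) x0 = 0"
    using jY unfolding jac2[OF z0 x0 Jz0 cc] by blast
  define a where "a = Y1 0"
  have va: "vector_derivative Y (at 0) = a" unfolding a_def using h(1) by (rule vector_derivative_at)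
  define U where "U s = Y1 s + Bo (Y s)" for s
  have bB: "bounded_linear Bo" using lin_br1 lin_bounded by blast
  have bK: "bounded_linear Ko" using lin_J1 lin_bounded by blast
  have dU: "(U has_vector_derivative Ko (U t)) (at t)" for t
  proof -
    have "(U has_vector_derivative Y2 t + Bo (Y1 t)) (at t)"
      unfolding U_def by (intro has_vector_derivative_add h(2) bounded_linear.has_vector_derivative[OF bB h(1)])
    moreover have "Y2 t + Bo (Y1 t) = Ko (U t)" using h(3)[of t] unfolding U_def
      by (simp add: algebra_simps eq_diff_eq)
    ultimately show ?thesis by simp
  qed
  have KU: "Ko (U t) = Ko a" for t
  proof -
    have "((\<lambda>s. Ko (U s)) has_vector_derivative Ko (Ko (U t))) (at t)" for t
      by (rule bounded_linear.has_vector_derivative[OF bK dU])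
    then have "((\<lambda>s. Ko (U s)) has_vector_derivative 0) (at t)" for t by simp
    moreover have "((\<lambda>s. Ko a) has_vector_derivative 0) (at t)" for t by simp
    moreover have "Ko (U 0) = Ko a" unfolding U_def a_def using Y0 by simp
    ultimately show ?thesis using same_deriv[of "\<lambda>s. Ko (U s)" "\<lambda>t. 0" "\<lambda>s. Ko a" 0 t] by blast
  qed
  have Ut: "U t = a + t *\<^sub>R Ko a" for t
  proof -
    have "(U has_vector_derivative Ko a) (at t)" for t using dU KU by simp
    moreover have "((\<lambda>t. a + t *\<^sub>R Ko a) has_vector_derivative Ko a) (at t)" for t
      by (auto intro!: derivative_eq_intros)
    moreover have "U 0 = a" unfolding U_def a_def using Y0 by simp
    ultimately show ?thesis using same_deriv[of U "\<lambda>t. Ko a" "\<lambda>t. a + t *\<^sub>R Ko a" 0 t] by simp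
  qed
  have BY: "Bo (Y t) = t *\<^sub>R Bo a + (t^2/2) *\<^sub>R Ao a" for t
  proof -
    have "((\<lambda>s. Bo (Y s)) has_vector_derivative Bo a + t *\<^sub>R Ao a) (at t)" for t
    proof -
      have "((\<lambda>s. Bo (Y s)) has_vector_derivative Bo (Y1 t)) (at t)"
        by (rule bounded_linear.has_vector_derivative[OF bB h(1)])
      moreover have "Y1 t = U t - Bo (Y t)" unfolding U_def by simp
      ultimately show ?thesis using Ut[of t] by simp
    qed
    moreover have "((\<lambda>t. t *\<^sub>R Bo a + (t^2/2) *\<^sub>R Ao a) has_vector_derivative Bo a + t *\<^sub>R Ao a) (at t)" for t
      by (auto intro!: derivative_eq_intros simp: power2_eq_square field_simps)
    moreover have "Bo (Y 0) = 0" using Y0 by simp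
    ultimately show ?thesis
      using same_deriv[of "\<lambda>s. Bo (Y s)" "\<lambda>t. Bo a + t *\<^sub>R Ao a" "\<lambda>t. t *\<^sub>R Bo a + (t^2/2) *\<^sub>R Ao a" 0 t]
      by simp
  qed
  have Y1t: "Y1 t = Y1p a t" for t
  proof -
    have "Y1 t = U t - Bo (Y t)" unfolding U_def by simp
    then show ?thesis unfolding Y1p_def Ut BY by (simp add: algebra_simps)
  qed
  have "Y t = Yp a t" for t
    using same_deriv[of Y Y1 "Yp a" 0 t] h(1) Yp_d Y1t Y0 by (simp add: Yp_def)
  then show ?thesis using va by auto
qed

lemma Yp0: "Yp a 0 = 0" unfolding Yp_def by simp
lemma vdYp: "vector_derivative (Yp a) (at 0) = a"
  using vector_derivative_at[OF Yp_d[of a 0]] by (simp add: Y1p_def)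
lemma Yp_add: "Yp (a + b) = (\<lambda>t. Yp a t + Yp b t)"
  unfolding Yp_def by (rule ext) (simp add: algebra_simps)
lemma Yp_scale: "Yp (r *\<^sub>R a) = (\<lambda>t. r *\<^sub>R Yp a t)"
  unfolding Yp_def by (rule ext) (simp add: algebra_simps)
lemma Yp_zero: "Yp 0 = (\<lambda>t. 0)"
  unfolding Yp_def by (rule ext) simp

lemma KK[simp]: "J (J y x0) x0 = 0" by simp

context fixes t0 :: real assumes t0: "t0 \<noteq> 0"
begin

definition "JS = {Y. jacobi_field g br c Y \<and> Y 0 = 0 \<and> Y t0 = 0}"
definition "E2 = {z \<in> Z. Ao z + (12 / t0^2) *\<^sub>R z = 0}"
definition "Phi a = a + (t0/2) *\<^sub>R (Ko a - Bo a) - (t0^2/6) *\<^sub>R Ao a"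
definition "Dm Y = vector_derivative Y (at 0) + (t0/2) *\<^sub>R Ko (vector_derivative Y (at 0))"

lemma Yp_t0: "Yp a t0 = t0 *\<^sub>R Phi a"
  unfolding Yp_def Phi_def by (simp add: algebra_simps power2_eq_square power3_eq_cube)

lemma JS_char: "Y \<in> JS \<longleftrightarrow> (\<exists>a. Y = Yp a \<and> Phi a = 0)"
proof
  assume "Y \<in> JS"
  then have "jacobi_field g br c Y" "Y 0 = 0" "Y t0 = 0" unfolding JS_def by auto
  then have "Y = Yp (vector_derivative Y (at 0))" "Y t0 = 0" using jac_form by auto
  then show "\<exists>a. Y = Yp a \<and> Phi a = 0" using Yp_t0 t0 by (metis scaleR_eq_0_iff)
next
  assume "\<exists>a. Y = Yp a \<and> Phi a = 0"
  then show "Y \<in> JS" unfolding JS_def using Yp_jac Yp0 Yp_t0 by auto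
qed

lemma Dm_Yp: "Dm (Yp a) = a + (t0/2) *\<^sub>R Ko a" unfolding Dm_def vdYp ..

lemma fwd: assumes "Phi a = 0" shows "a + (t0/2) *\<^sub>R Ko a \<in> E2"
proof -
  define z where "z = a + (t0/2) *\<^sub>R Ko a"
  have "Phi a = z - ((t0/2) *\<^sub>R Bo a + (t0^2/6) *\<^sub>R Ao a)"
    unfolding Phi_def z_def by (simp add: algebra_simps)
  then have zeq: "z = (t0/2) *\<^sub>R Bo a + (t0^2/6) *\<^sub>R Ao a" using assms by simp
  have "Bo (Phi a) = Bo a + (t0/2) *\<^sub>R Ao a" unfolding Phi_def by (simp add: algebra_simps)
  then have Ba: "Bo a = (-(t0/2)) *\<^sub>R Ao a" using assms by (simp add: eq_neg_iff_add_eq_0)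
  have "z = ((t0/2) * (-(t0/2)) + t0^2/6) *\<^sub>R Ao a" unfolding zeq Ba by (simp add: algebra_simps)
  also have "(t0/2) * (-(t0/2)) + t0^2/6 = -(t0^2/12)" by (simp add: power2_eq_square field_simps)
  finally have z2: "z = (-(t0^2/12)) *\<^sub>R Ao a" .
  have Az: "Ao z = Ao a" unfolding z_def by simp
  have zZ: "z \<in> Z" unfolding zeq using subspace_Z by (simp add: subspace_add subspace_scale)
  have "Ao z + (12 / t0^2) *\<^sub>R z = Ao a + (12 / t0^2) *\<^sub>R ((-(t0^2/12)) *\<^sub>R Ao a)"
    by (subst Az, subst z2, rule refl)
  also have "\<dots> = 0" using t0 by simp
  finally have "Ao z + (12 / t0^2) *\<^sub>R z = 0" .
  then show ?thesis using zZ unfolding E2_def z_def by simp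
qed

lemma bwd: assumes z: "z \<in> E2"
  shows "Phi (z - (t0/2) *\<^sub>R Ko z) = 0" "(z - (t0/2) *\<^sub>R Ko z) + (t0/2) *\<^sub>R Ko (z - (t0/2) *\<^sub>R Ko z) = z"
proof -
  have zZ: "z \<in> Z" and Az: "Ao z = (-(12 / t0^2)) *\<^sub>R z" using z unfolding E2_def
    by (auto simp: eq_neg_iff_add_eq_0)
  have "Phi (z - (t0/2) *\<^sub>R Ko z) = (1 + ((t0/2) * (t0/2)) * (-(12 / t0^2)) - (t0^2/6) * (-(12 / t0^2))) *\<^sub>R z"
    unfolding Phi_def using zZ by (simp add: Az algebra_simps)
  also have "1 + ((t0/2) * (t0/2)) * (-(12 / t0^2)) - (t0^2/6) * (-(12 / t0^2)) = 0"
    using t0 by (simp add: field_simps power2_eq_square)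
  finally show "Phi (z - (t0/2) *\<^sub>R Ko z) = 0" by simp
  show "(z - (t0/2) *\<^sub>R Ko z) + (t0/2) *\<^sub>R Ko (z - (t0/2) *\<^sub>R Ko z) = z" by simp
qed

lemma Dm_inj: "a + (t0/2) *\<^sub>R Ko a = b + (t0/2) *\<^sub>R Ko b \<Longrightarrow> a = b"
proof -
  assume e: "a + (t0/2) *\<^sub>R Ko a = b + (t0/2) *\<^sub>R Ko b"
  have "Ko (a + (t0/2) *\<^sub>R Ko a) = Ko (b + (t0/2) *\<^sub>R Ko b)" using e by simp
  then have "Ko a = Ko b" by simp
  then show "a = b" using e by simp
qed

lemma subE2: "subspace E2"
  unfolding E2_def subspace_def
proof (intro conjI ballI allI)
  show "0 \<in> {z \<in> Z. Ao z + (12 / t0\<^sup>2) *\<^sub>R z = 0}" using subspace_Z by (simp add: subspace_0)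
next
  fix x y assume x: "x \<in> {z \<in> Z. Ao z + (12 / t0\<^sup>2) *\<^sub>R z = 0}" and y: "y \<in> {z \<in> Z. Ao z + (12 / t0\<^sup>2) *\<^sub>R z = 0}"
  have "Ao (x + y) + (12 / t0\<^sup>2) *\<^sub>R (x + y) = (Ao x + (12 / t0\<^sup>2) *\<^sub>R x) + (Ao y + (12 / t0\<^sup>2) *\<^sub>R y)"
    by (simp add: algebra_simps)
  moreover have "Ao x + (12 / t0\<^sup>2) *\<^sub>R x = 0" "Ao y + (12 / t0\<^sup>2) *\<^sub>R y = 0" "x \<in> Z" "y \<in> Z" using x y by auto
  ultimately show "x + y \<in> {z \<in> Z. Ao z + (12 / t0\<^sup>2) *\<^sub>R z = 0}" using subspace_Z
    by (simp only: mem_Collect_eq add_0 subspace_add)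
next
  fix r x assume x: "x \<in> {z \<in> Z. Ao z + (12 / t0\<^sup>2) *\<^sub>R z = 0}"
  have "Ao (r *\<^sub>R x) + (12 / t0\<^sup>2) *\<^sub>R (r *\<^sub>R x) = r *\<^sub>R (Ao x + (12 / t0\<^sup>2) *\<^sub>R x)"
    by (simp add: algebra_simps)
  then show "r *\<^sub>R x \<in> {z \<in> Z. Ao z + (12 / t0\<^sup>2) *\<^sub>R z = 0}" using x subspace_Z by (simp add: subspace_scale)
qed

lemma img: "Dm ` JS = E2"
proof
  show "Dm ` JS \<subseteq> E2" using JS_char fwd Dm_Yp by auto
  show "E2 \<subseteq> Dm ` JS"
  proof
    fix z assume z: "z \<in> E2"
    have "Yp (z - (t0/2) *\<^sub>R Ko z) \<in> JS" using JS_char bwd(1)[OF z] by blast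
    moreover have "Dm (Yp (z - (t0/2) *\<^sub>R Ko z)) = z" using Dm_Yp bwd(2)[OF z] by simp
    ultimately show "z \<in> Dm ` JS" by force
  qed
qed

lemma injD: "inj_on Dm JS"
proof (rule inj_onI)
  fix Y Y' assume "Y \<in> JS" "Y' \<in> JS" "Dm Y = Dm Y'"
  then obtain a b where "Y = Yp a" "Y' = Yp b" "Dm (Yp a) = Dm (Yp b)" using JS_char by auto
  then have "a = b" using Dm_inj unfolding Dm_Yp by blast
  then show "Y = Y'" using \<open>Y = Yp a\<close> \<open>Y' = Yp b\<close> by simp
qed

lemma dimJS: "vector_space.dim (\<lambda>(r::real) (f::real \<Rightarrow> 'n). (\<lambda>t. r *\<^sub>R f t)) JS = dim E2"
proof (rule dim_transfer[OF subE2 _ _ _ _ _ img injD])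
  show "(\<lambda>t. 0) \<in> JS" unfolding JS_char by (intro exI[of _ 0]) (simp add: Yp_zero Phi_def)
next
  fix Y Z assume "Y \<in> JS" "Z \<in> JS"
  then obtain a b where ab: "Y = Yp a" "Phi a = 0" "Z = Yp b" "Phi b = 0" using JS_char by auto
  have "Phi (a + b) = Phi a + Phi b" unfolding Phi_def by (simp add: algebra_simps)
  then have "Phi (a + b) = 0" using ab by simp
  then show "(\<lambda>t. Y t + Z t) \<in> JS" unfolding JS_char ab by (intro exI[of _ "a + b"]) (simp add: Yp_add)
  have "Dm (\<lambda>t. Y t + Z t) = Dm (Yp (a + b))" unfolding ab Yp_add ..
  then show "Dm (\<lambda>t. Y t + Z t) = Dm Y + Dm Z" unfolding ab Dm_Yp by (simp add: algebra_simps)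
next
  fix Y r assume "Y \<in> JS"
  then obtain a where ab: "Y = Yp a" "Phi a = 0" using JS_char by auto
  have "Phi (r *\<^sub>R a) = r *\<^sub>R Phi a" unfolding Phi_def by (simp add: algebra_simps)
  then have "Phi (r *\<^sub>R a) = 0" using ab by simp
  then show "(\<lambda>t. r *\<^sub>R Y t) \<in> JS" unfolding JS_char ab by (intro exI[of _ "r *\<^sub>R a"]) (simp add: Yp_scale)
  have "Dm (\<lambda>t. r *\<^sub>R Y t) = Dm (Yp (r *\<^sub>R a))" unfolding ab Yp_scale ..
  then show "Dm (\<lambda>t. r *\<^sub>R Y t) = r *\<^sub>R Dm Y" unfolding ab Dm_Yp by (simp add: algebra_simps)
qed

lemma conj_iff: "conjugate_at g br c t0 \<longleftrightarrow> (\<exists>z\<in>E2. z \<noteq> 0)"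
proof
  assume "conjugate_at g br c t0"
  then obtain Y where Y: "Y \<in> JS" "Y \<noteq> (\<lambda>_. 0)" unfolding conjugate_at_def JS_def by blast
  then obtain a where a: "Y = Yp a" "Phi a = 0" using JS_char by auto
  have "a \<noteq> 0" using a Y Yp_zero by auto
  then have "a + (t0/2) *\<^sub>R Ko a \<noteq> 0" using Dm_inj[of a 0] by auto
  then show "\<exists>z\<in>E2. z \<noteq> 0" using fwd[OF a(2)] by blast
next
  assume "\<exists>z\<in>E2. z \<noteq> 0"
  then obtain z where z: "z \<in> E2" "z \<noteq> 0" by blast
  define a where "a = z - (t0/2) *\<^sub>R Ko z"
  have "Yp a \<in> JS" using JS_char bwd(1)[OF z(1)] a_def by blast
  moreover have "Yp a \<noteq> (\<lambda>_. 0)"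
  proof
    assume "Yp a = (\<lambda>_. 0)"
    then have "Dm (Yp a) = Dm (Yp 0)" using Yp_zero by simp
    then have "z = 0" using Dm_Yp bwd(2)[OF z(1)] a_def by simp
    then show False using z(2) by simp
  qed
  ultimately show "conjugate_at g br c t0" unfolding conjugate_at_def JS_def using t0 by blast
qed

end

end

locale case3 = nset br g for br :: "'n::euclidean_space \<Rightarrow> 'n \<Rightarrow> 'n" and g +
  fixes z0 :: 'n and c :: "real \<Rightarrow> 'n"
  assumes z0: "z0 \<in> lie_center br"
    and geo: "geodesic_velocity g br c" and init: "c 0 = z0"
begin

abbreviation "Jz \<equiv> J z0"

lemma linJz: "linear Jz" by (rule lin_J2)

lemma cc: "c t = z0"
  using geo_const[OF z0 _ geo, of 0 t] init by (simp add: subspace_0[OF subspace_V] z0)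

lemma jac: "jacobi_field g br c Y \<longleftrightarrow> (\<exists>Y1. (\<forall>t. (Y has_vector_derivative Y1 t) (at t)) \<and> sol Jz Y1)"
  by (rule jac3[OF z0 cc])

lemma jacE:
  assumes "jacobi_field g br c Y"
  obtains Y1 where "\<And>t. (Y has_vector_derivative Y1 t) (at t)" "sol Jz Y1" "Y1 0 = vector_derivative Y (at 0)"
  using assms unfolding jac by (metis vector_derivative_at)

lemma jac_unique:
  assumes "jacobi_field g br c Y" "jacobi_field g br c Y'" "Y 0 = Y' 0"
    "vector_derivative Y (at 0) = vector_derivative Y' (at 0)"
  shows "Y = Y'"
proof -
  obtain Y1 where Y1: "\<And>t. (Y has_vector_derivative Y1 t) (at t)" "sol Jz Y1" "Y1 0 = vector_derivative Y (at 0)"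
    using jacE[OF assms(1)] by blast
  obtain Y1' where Y1': "\<And>t. (Y' has_vector_derivative Y1' t) (at t)" "sol Jz Y1'" "Y1' 0 = vector_derivative Y' (at 0)"
    using jacE[OF assms(2)] by blast
  have "Y1 t = Y1' t" for t using ode_unique[OF linJz Y1(2) Y1'(2), of 0 t] Y1(3) Y1'(3) assms(4) by simp
  then have "Y t = Y' t" for t using same_deriv[of Y Y1 Y' 0 t] Y1(1) Y1'(1) assms(3) by simp
  then show ?thesis by auto
qed

lemma jac_add:
  assumes "jacobi_field g br c Y" "jacobi_field g br c Y'"
  shows "jacobi_field g br c (\<lambda>t. Y t + Y' t)"
    "vector_derivative (\<lambda>t. Y t + Y' t) (at 0) = vector_derivative Y (at 0) + vector_derivative Y' (at 0)"
proof -
  obtain Y1 where Y1: "\<And>t. (Y has_vector_derivative Y1 t) (at t)" "sol Jz Y1" "Y1 0 = vector_derivative Y (at 0)"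
    using jacE[OF assms(1)] by blast
  obtain Y1' where Y1': "\<And>t. (Y' has_vector_derivative Y1' t) (at t)" "sol Jz Y1'" "Y1' 0 = vector_derivative Y' (at 0)"
    using jacE[OF assms(2)] by blast
  have d: "((\<lambda>t. Y t + Y' t) has_vector_derivative Y1 t + Y1' t) (at t)" for t
    by (intro has_vector_derivative_add Y1(1) Y1'(1))
  show "jacobi_field g br c (\<lambda>t. Y t + Y' t)" unfolding jac
    using d sol_add[OF linJz Y1(2) Y1'(2)] by (intro exI[of _ "\<lambda>t. Y1 t + Y1' t"]) blast
  show "vector_derivative (\<lambda>t. Y t + Y' t) (at 0) = vector_derivative Y (at 0) + vector_derivative Y' (at 0)"
    using vector_derivative_at[OF d[of 0]] Y1(3) Y1'(3) by simp
qed

lemma jac_scale: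
  assumes "jacobi_field g br c Y"
  shows "jacobi_field g br c (\<lambda>t. r *\<^sub>R Y t)"
    "vector_derivative (\<lambda>t. r *\<^sub>R Y t) (at 0) = r *\<^sub>R vector_derivative Y (at 0)"
proof -
  obtain Y1 where Y1: "\<And>t. (Y has_vector_derivative Y1 t) (at t)" "sol Jz Y1" "Y1 0 = vector_derivative Y (at 0)"
    using jacE[OF assms(1)] by blast
  have d: "((\<lambda>t. r *\<^sub>R Y t) has_vector_derivative r *\<^sub>R Y1 t) (at t)" for t
    by (rule bounded_linear.has_vector_derivative[OF bounded_linear_scaleR_right Y1(1)])
  show "jacobi_field g br c (\<lambda>t. r *\<^sub>R Y t)" unfolding jac
    using d sol_scale[OF linJz Y1(2)] by (intro exI[of _ "\<lambda>t. r *\<^sub>R Y1 t"]) blast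
  show "vector_derivative (\<lambda>t. r *\<^sub>R Y t) (at 0) = r *\<^sub>R vector_derivative Y (at 0)"
    using vector_derivative_at[OF d[of 0]] Y1(3) by simp
qed

lemma jac_lin: assumes "Jz a = 0" shows "jacobi_field g br c (\<lambda>t. t *\<^sub>R a)"
  "vector_derivative (\<lambda>t. t *\<^sub>R a) (at 0) = a"
proof -
  have d: "((\<lambda>t. t *\<^sub>R a) has_vector_derivative a) (at t)" for t
    by (auto intro!: derivative_eq_intros)
  have "sol Jz (\<lambda>t. a)" unfolding sol_def using assms by simp
  then show "jacobi_field g br c (\<lambda>t. t *\<^sub>R a)" unfolding jac using d by (intro exI[of _ "\<lambda>t. a"]) blast
  show "vector_derivative (\<lambda>t. t *\<^sub>R a) (at 0) = a" using vector_derivative_at[OF d] .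
qed

definition "Ye h x t = (sin (h * t) / h) *\<^sub>R x + ((1 - cos (h * t)) / h^2) *\<^sub>R Jz x"

lemma Ye:
  assumes h: "h > 0" and x: "Jz (Jz x) = (-(h^2)) *\<^sub>R x"
  shows "jacobi_field g br c (Ye h x)" "Ye h x 0 = 0" "vector_derivative (Ye h x) (at 0) = x"
    "(\<exists>m::int. h * t0 = 2 * pi * m) \<Longrightarrow> Ye h x t0 = 0"
proof -
  have d: "(Ye h x has_vector_derivative (cos (h * t) *\<^sub>R x + (sin (h * t) / h) *\<^sub>R Jz x)) (at t)" for t
    unfolding Ye_def using h by (auto intro!: derivative_eq_intros simp: field_simps power2_eq_square)
  show "jacobi_field g br c (Ye h x)" unfolding jac using d sol_eig[OF linJz x] h by force
  show "Ye h x 0 = 0" unfolding Ye_def by simp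
  show "vector_derivative (Ye h x) (at 0) = x" using vector_derivative_at[OF d[of 0]] by simp
  assume "\<exists>m::int. h * t0 = 2 * pi * m"
  then obtain m :: int where m: "h * t0 = 2 * pi * m" by blast
  have "sin (h * t0) = 0" "cos (h * t0) = 1" unfolding m
    by (simp_all add: sin_eq_0 cos_one_2pi_int)
  then show "Ye h x t0 = 0" unfolding Ye_def by simp
qed

lemma jac0: "jacobi_field g br c (\<lambda>t. 0)" "vector_derivative (\<lambda>t. 0::'n) (at 0) = 0"
  using jac_lin[of 0] by simp_all

definition "Lam = {l::real. l > 0 \<and> (\<exists>x\<in>V. x \<noteq> 0 \<and> Jz (Jz x) = (-(l^2)) *\<^sub>R x)}"
definition "Eg h = {x. Jz (Jz x) = (-(h^2)) *\<^sub>R x}"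

lemma linJJ: "linear (\<lambda>x. Jz (Jz x))" using linear_compose[OF linJz linJz] by (simp add: o_def)

lemma Eg_V: assumes "h \<noteq> 0" "x \<in> Eg h" shows "x \<in> V"
proof -
  have "x = Jz ((-(1/h^2)) *\<^sub>R Jz x)" using assms unfolding Eg_def by simp
  then show ?thesis by (metis J_V)
qed

lemma Ek_eq: assumes h: "h > 0" shows "{x\<in>V. Jz (Jz x) + h^2 *\<^sub>R x = 0} = Eg h"
proof -
  have "Jz (Jz x) + h^2 *\<^sub>R x = 0 \<longleftrightarrow> x \<in> Eg h" for x
    unfolding Eg_def by (auto simp: eq_neg_iff_add_eq_0)
  then show ?thesis using Eg_V[of h] h by auto
qed

lemma subEg: "subspace (Eg h)" unfolding Eg_def by (rule subspace_eig[OF linJJ])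

lemma Eg_nz: "h \<in> Lam \<Longrightarrow> \<exists>x\<in>Eg h. x \<noteq> 0" unfolding Lam_def Eg_def by auto

lemma eigdim: assumes "finite K" "K \<subseteq> {h. h > 0}"
  shows "dim (span (\<Union>h\<in>K. Eg h)) = (\<Sum>h\<in>K. dim (Eg h))"
proof -
  have inj: "inj_on (\<lambda>h::real. -(h^2)) K"
  proof (rule inj_onI)
    fix x y assume "x \<in> K" "y \<in> K" "-(x^2) = -(y^2)"
    then have "x \<ge> 0" "y \<ge> 0" "x^2 = y^2" using assms(2) by auto
    then show "x = y" using power2_eq_iff_nonneg by blast
  qed
  have "dim (span (\<Union>l\<in>(\<lambda>h. -(h^2)) ` K. {x. Jz (Jz x) = l *\<^sub>R x}))
      = (\<Sum>l\<in>(\<lambda>h. -(h^2)) ` K. dim {x. Jz (Jz x) = l *\<^sub>R x})"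
    by (rule eig_dim[OF linJJ finite_imageI[OF assms(1)]])
  also have "\<dots> = (\<Sum>h\<in>K. dim (Eg h))" unfolding Eg_def by (simp only: sum.reindex[OF inj] o_def)
  finally show ?thesis unfolding Eg_def by (simp add: image_image)
qed

lemma dim_Eg_pos: "h \<in> Lam \<Longrightarrow> dim (Eg h) \<ge> 1"
proof -
  assume "h \<in> Lam"
  then obtain x where "x \<in> Eg h" "x \<noteq> 0" using Eg_nz by blast
  then have "\<not> Eg h \<subseteq> {0}" by auto
  then have "dim (Eg h) \<noteq> 0" by (simp add: dim_eq_0)
  then show ?thesis by linarith
qed

lemma Lam_pos: "Lam \<subseteq> {h. h > 0}" unfolding Lam_def by auto

lemma Lam_finite: "finite Lam"
proof (rule ccontr)
  assume "infinite Lam"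
  then obtain K where K: "K \<subseteq> Lam" "finite K" "card K = Suc DIM('n)"
    using infinite_arbitrarily_large by blast
  have "card K = (\<Sum>h\<in>K. 1)" by simp
  also have "\<dots> \<le> (\<Sum>h\<in>K. dim (Eg h))" using K(1) dim_Eg_pos by (intro sum_mono) auto
  also have "\<dots> = dim (span (\<Union>h\<in>K. Eg h))" using eigdim[OF K(2)] K(1) Lam_pos by auto
  also have "\<dots> \<le> DIM('n)" by (rule dim_subset_UNIV)
  finally show False using K(3) by simp
qed

context fixes t0 :: real assumes t0: "t0 \<noteq> 0"
begin

definition "Ht = {h\<in>Lam. \<exists>m::int. h * t0 = 2 * pi * m}"
definition "W3 = span (\<Union>h\<in>Ht. Eg h)"
definition "JS = {Y. jacobi_field g br c Y \<and> Y 0 = 0 \<and> Y t0 = 0}"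

lemma Ht_fin: "finite Ht" using Lam_finite unfolding Ht_def by simp

lemma exist: "u \<in> W3 \<Longrightarrow> \<exists>Y\<in>JS. vector_derivative Y (at 0) = u"
proof -
  assume u: "u \<in> W3"
  have sub: "subspace {u. \<exists>Y\<in>JS. vector_derivative Y (at 0) = u}" unfolding subspace_def
  proof (intro conjI ballI allI)
    show "0 \<in> {u. \<exists>Y\<in>JS. vector_derivative Y (at 0) = u}" unfolding JS_def using jac0 by force
  next
    fix x y assume "x \<in> {u. \<exists>Y\<in>JS. vector_derivative Y (at 0) = u}" "y \<in> {u. \<exists>Y\<in>JS. vector_derivative Y (at 0) = u}"
    then obtain Y Y' where "Y \<in> JS" "Y' \<in> JS" "vector_derivative Y (at 0) = x" "vector_derivative Y' (at 0) = y" by blast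
    then show "x + y \<in> {u. \<exists>Y\<in>JS. vector_derivative Y (at 0) = u}" unfolding JS_def
      using jac_add by (intro CollectI bexI[of _ "\<lambda>t. Y t + Y' t"]) auto
  next
    fix r x assume "x \<in> {u. \<exists>Y\<in>JS. vector_derivative Y (at 0) = u}"
    then obtain Y where "Y \<in> JS" "vector_derivative Y (at 0) = x" by blast
    then show "r *\<^sub>R x \<in> {u. \<exists>Y\<in>JS. vector_derivative Y (at 0) = u}" unfolding JS_def
      using jac_scale by (intro CollectI bexI[of _ "\<lambda>t. r *\<^sub>R Y t"]) auto
  qed
  have base: "\<exists>Y\<in>JS. vector_derivative Y (at 0) = x" if x: "x \<in> (\<Union>h\<in>Ht. Eg h)" for x
  proof -
    obtain h where h: "h \<in> Ht" "x \<in> Eg h" using x by blast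
    have hp: "h > 0" using h(1) Lam_pos unfolding Ht_def by auto
    have hm: "\<exists>m::int. h * t0 = 2 * pi * m" using h(1) unfolding Ht_def by auto
    have xe: "Jz (Jz x) = (-(h^2)) *\<^sub>R x" using h(2) unfolding Eg_def by simp
    show ?thesis unfolding JS_def using Ye(1-3)[OF hp xe] Ye(4)[OF hp xe hm] by (intro bexI[of _ "Ye h x"]) auto
  qed
  show ?thesis using span_induct[of u "\<Union>h\<in>Ht. Eg h" "\<lambda>u. \<exists>Y\<in>JS. vector_derivative Y (at 0) = u"]
    u sub base unfolding W3_def by blast
qed

lemma inW3: assumes Y: "Y \<in> JS" shows "vector_derivative Y (at 0) \<in> W3"
proof -
  have jY: "jacobi_field g br c Y" and Y0: "Y 0 = 0" and Yt0: "Y t0 = 0" using Y unfolding JS_def by auto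
  obtain Y1 where Y1: "\<And>t. (Y has_vector_derivative Y1 t) (at t)" "sol Jz Y1" "Y1 0 = vector_derivative Y (at 0)"
    using jacE[OF jY] by blast
  define a where "a = Y1 0"
  have bJ: "bounded_linear Jz" using linJz lin_bounded by blast
  have per0: "Y1 t0 = Y1 0"
  proof -
    have "((\<lambda>t. Y1 t - Jz (Y t)) has_vector_derivative Jz (Y1 t) - Jz (Y1 t)) (at t)" for t
      using Y1(2) unfolding sol_def
      by (intro has_vector_derivative_diff bounded_linear.has_vector_derivative[OF bJ Y1(1)]) auto
    then have "((\<lambda>t. Y1 t - Jz (Y t)) has_vector_derivative 0) (at t)" for t by simp
    then have "Y1 t0 - Jz (Y t0) = Y1 0 - Jz (Y 0)"
      using same_deriv[of "\<lambda>t. Y1 t - Jz (Y t)" "\<lambda>t. 0" "\<lambda>t. Y1 0 - Jz (Y 0)" 0 t0] by simp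
    then show ?thesis using Y0 Yt0 by (simp add: linear_0[OF linJz])
  qed
  define T where "T = \<bar>t0\<bar>"
  have T: "T > 0" using t0 unfolding T_def by simp
  have perT: "Y1 T = Y1 0"
  proof (cases "t0 > 0")
    case True then show ?thesis using per0 unfolding T_def by simp
  next
    case False
    have "Y1 (s + t0) = Y1 s" for s
      using ode_unique[OF linJz sol_shift[OF Y1(2), of t0] Y1(2), of 0 s] per0 by simp
    from this[of "-t0"] show ?thesis using False unfolding T_def by simp
  qed
  have "a \<in> span ({y. Jz y = 0} \<union> {y. \<exists>\<mu>>0. Jz (Jz y) = (-(\<mu>^2)) *\<^sub>R y \<and> (\<exists>k::int. \<mu> * T = 2 * pi * k)})"
    unfolding a_def by (rule periodic_decomp[OF linJz Y1(2) T perT])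
  then obtain a0 u where au: "a = a0 + u" "a0 \<in> span {y. Jz y = 0}"
    "u \<in> span {y. \<exists>\<mu>>0. Jz (Jz y) = (-(\<mu>^2)) *\<^sub>R y \<and> (\<exists>k::int. \<mu> * T = 2 * pi * k)}"
    unfolding span_Un by blast
  have "subspace {y. Jz y = 0}" unfolding subspace_def by (simp add: linear_add[OF linJz] linear_scale[OF linJz] linear_0[OF linJz])
  then have a0: "Jz a0 = 0" using au(2) by (metis mem_Collect_eq span_eq_iff)
  have subW3: "subspace W3" unfolding W3_def by simp
  have "{y. \<exists>\<mu>>0. Jz (Jz y) = (-(\<mu>^2)) *\<^sub>R y \<and> (\<exists>k::int. \<mu> * T = 2 * pi * k)} \<subseteq> W3"
  proof
    fix y assume "y \<in> {y. \<exists>\<mu>>0. Jz (Jz y) = (-(\<mu>^2)) *\<^sub>R y \<and> (\<exists>k::int. \<mu> * T = 2 * pi * k)}"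
    then obtain \<mu> k where mk: "\<mu> > 0" "Jz (Jz y) = (-(\<mu>^2)) *\<^sub>R y" "\<mu> * T = 2 * pi * of_int k" by blast
    show "y \<in> W3"
    proof (cases "y = 0")
      case True then show ?thesis using subW3 by (simp add: subspace_0)
    next
      case False
      have yE: "y \<in> Eg \<mu>" using mk unfolding Eg_def by simp
      have "y \<in> V" using Eg_V[OF _ yE] mk by simp
      then have lam: "\<mu> \<in> Lam" unfolding Lam_def using mk False by auto
      have "\<exists>m::int. \<mu> * t0 = 2 * pi * m"
      proof (cases "t0 > 0")
        case True then show ?thesis using mk unfolding T_def by auto
      next
        case False
        then have "\<mu> * t0 = 2 * pi * of_int (-k)" using mk unfolding T_def by simp
        then show ?thesis by blast
      qed
      then have "\<mu> \<in> Ht" unfolding Ht_def using lam by simp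
      then show ?thesis unfolding W3_def using yE by (auto intro: span_base)
    qed
  qed
  then have uW: "u \<in> W3" using au(3) subW3 by (meson span_minimal subsetD)
  obtain Yu where Yu: "Yu \<in> JS" "vector_derivative Yu (at 0) = u" using exist[OF uW] by blast
  define Zf where "Zf t = Yu t + t *\<^sub>R a0" for t
  have jYu: "jacobi_field g br c Yu" and Yu0: "Yu 0 = 0" and Yut0: "Yu t0 = 0" using Yu(1) unfolding JS_def by auto
  have jZ: "jacobi_field g br c Zf" unfolding Zf_def by (rule jac_add(1)[OF jYu jac_lin(1)[OF a0]])
  have dZ: "vector_derivative Zf (at 0) = u + a0" unfolding Zf_def
    using jac_add(2)[OF jYu jac_lin(1)[OF a0]] jac_lin(2)[OF a0] Yu(2) by simp
  have "Zf = Y" using jac_unique[OF jZ jY] Y0 Yu0 dZ Y1(3) au(1) a_def unfolding Zf_def by (simp add: add.commute)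
  then have "t0 *\<^sub>R a0 = 0" using Yt0 Yut0 unfolding Zf_def by (metis add_0)
  then have "a0 = 0" using t0 by simp
  then show ?thesis using au(1) uW Y1(3) a_def by simp
qed

lemma img: "(\<lambda>Y. vector_derivative Y (at 0)) ` JS = W3"
  using inW3 exist by force

lemma injD: "inj_on (\<lambda>Y. vector_derivative Y (at 0)) JS"
  by (rule inj_onI) (use jac_unique in \<open>auto simp: JS_def\<close>)

lemma dimJS: "vector_space.dim (\<lambda>(r::real) (f::real \<Rightarrow> 'n). (\<lambda>t. r *\<^sub>R f t)) JS = dim W3"
proof (rule dim_transfer[OF _ _ _ _ _ _ img injD])
  show "subspace W3" unfolding W3_def by simp
  show "(\<lambda>t. 0) \<in> JS" unfolding JS_def using jac0 by simp
  fix Y Z assume "Y \<in> JS" "Z \<in> JS"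
  then show "(\<lambda>t. Y t + Z t) \<in> JS" "vector_derivative (\<lambda>t. Y t + Z t) (at 0) = vector_derivative Y (at 0) + vector_derivative Z (at 0)"
    unfolding JS_def using jac_add by auto
next
  fix Y r assume "Y \<in> JS"
  then show "(\<lambda>t. r *\<^sub>R Y t) \<in> JS" "vector_derivative (\<lambda>t. r *\<^sub>R Y t) (at 0) = r *\<^sub>R vector_derivative Y (at 0)"
    unfolding JS_def using jac_scale by auto
qed

lemma dimW3: "dim W3 = (\<Sum>h\<in>Ht. dim (Eg h))"
  unfolding W3_def by (rule eigdim[OF Ht_fin]) (use Lam_pos in \<open>auto simp: Ht_def\<close>)

lemma W3_V: "W3 \<subseteq> V"
proof -
  have "(\<Union>h\<in>Ht. Eg h) \<subseteq> V"
  proof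
    fix x assume "x \<in> (\<Union>h\<in>Ht. Eg h)"
    then obtain h where h: "h \<in> Ht" "x \<in> Eg h" by blast
    then have "h > 0" using Lam_pos unfolding Ht_def by auto
    then show "x \<in> V" using Eg_V[of h x] h(2) by simp
  qed
  then show ?thesis unfolding W3_def using subspace_V by (rule span_minimal)
qed

lemma conj_iff: "conjugate_at g br c t0 \<longleftrightarrow> Ht \<noteq> {}"
proof
  assume "conjugate_at g br c t0"
  then obtain Y where Y: "Y \<in> JS" "Y \<noteq> (\<lambda>_. 0)" unfolding conjugate_at_def JS_def by blast
  have "vector_derivative Y (at 0) \<noteq> 0"
  proof
    assume "vector_derivative Y (at 0) = 0"
    then have "Y = (\<lambda>t. 0)" using jac_unique[of Y "\<lambda>t. 0"] jac0 Y(1) unfolding JS_def by auto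
    then show False using Y(2) by simp
  qed
  moreover have "vector_derivative Y (at 0) \<in> W3" by (rule inW3[OF Y(1)])
  ultimately show "Ht \<noteq> {}" unfolding W3_def by auto
next
  assume "Ht \<noteq> {}"
  then obtain h where h: "h \<in> Ht" by blast
  then obtain x where x: "x \<in> Eg h" "x \<noteq> 0" using Eg_nz unfolding Ht_def by blast
  have "x \<in> W3" unfolding W3_def using h x by (auto intro: span_base)
  then obtain Y where Y: "Y \<in> JS" "vector_derivative Y (at 0) = x" using exist by blast
  have "Y \<noteq> (\<lambda>_. 0)" using Y(2) x(2) jac0(2) by auto
  then show "conjugate_at g br c t0" unfolding conjugate_at_def using Y(1) t0 unfolding JS_def by blast
qed

end

end

theorem mainTheorem3:
  fixes br :: "'n::euclidean_space \<Rightarrow> 'n \<Rightarrow> 'n"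
    and g :: "'n \<Rightarrow> 'n \<Rightarrow> real"
    and z0 x0 :: 'n
    and c :: "real \<Rightarrow> 'n"
  assumes nil: "two_step_nilpotent br"
    and ip: "inner_prod g"
    and zndeg: "nondeg_on g (lie_center br)"
    and z0: "z0 \<in> lie_center br"
    and x0: "x0 \<in> vpart g br"
    and geo: "geodesic_velocity g br c"
    and init: "c 0 = z0 + x0"
  shows
   "((\<forall>x\<in>vpart g br. Jmap g br z0 x = 0) \<and> x0 = 0 \<longrightarrow>
        (\<forall>t. \<not> conjugate_at g br c t))
    \<and>
    ((\<forall>x\<in>vpart g br. Jmap g br z0 x = 0) \<and> x0 \<noteq> 0 \<longrightarrow>
        (\<forall>t. t \<noteq> 0 \<longrightarrow>
          (conjugate_at g br c t \<longleftrightarrow>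
             (\<exists>z\<in>lie_center br. z \<noteq> 0 \<and> br x0 (Jmap g br z x0) = (- 12 / t\<^sup>2) *\<^sub>R z))
          \<and> ((\<exists>z\<in>lie_center br. z \<noteq> 0 \<and> br x0 (Jmap g br z x0) = (- 12 / t\<^sup>2) *\<^sub>R z) \<longrightarrow>
               mult_cp g br c t =
                 dim {z\<in>lie_center br. br x0 (Jmap g br z x0) + (12 / t\<^sup>2) *\<^sub>R z = 0}
               \<and> dim {z\<in>lie_center br. br x0 (Jmap g br z x0) + (12 / t\<^sup>2) *\<^sub>R z = 0}
                   \<le> dim (lie_center br))))
    \<and>
    ((\<exists>x\<in>vpart g br. Jmap g br z0 x \<noteq> 0) \<and> x0 = 0 \<longrightarrow>
       (let \<Lambda> = {l::real. l > 0 \<and>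
                  (\<exists>x\<in>vpart g br. x \<noteq> 0 \<and> Jmap g br z0 (Jmap g br z0 x) = (- l\<^sup>2) *\<^sub>R x)}
        in (\<forall>t. conjugate_at g br c t \<longleftrightarrow>
                (\<exists>l\<in>\<Lambda>. \<exists>n::int. n \<noteq> 0 \<and> t = 2 * pi / l * of_int n))
         \<and> (\<forall>l\<in>\<Lambda>. \<forall>n::int. n \<noteq> 0 \<longrightarrow>
               mult_cp g br c (2 * pi / l * of_int n) =
                 (\<Sum>h\<in>{h\<in>\<Lambda>. \<exists>m::int. m \<noteq> 0 \<and> h = of_int m * (l / of_int n)}.
                    dim {x\<in>vpart g br. Jmap g br z0 (Jmap g br z0 x) + h\<^sup>2 *\<^sub>R x = 0})
               \<and> (\<Sum>h\<in>{h\<in>\<Lambda>. \<exists>m::int. m \<noteq> 0 \<and> h = of_int m * (l / of_int n)}.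
                    dim {x\<in>vpart g br. Jmap g br z0 (Jmap g br z0 x) + h\<^sup>2 *\<^sub>R x = 0})
                  \<le> dim (vpart g br))))"
proof -
  interpret nset br g by (rule nset.intro[OF nil ip zndeg])
  have P1: "((\<forall>x\<in>vpart g br. Jmap g br z0 x = 0) \<and> x0 = 0 \<longrightarrow> (\<forall>t. \<not> conjugate_at g br c t))"
  proof (intro impI allI)
    assume h: "(\<forall>x\<in>vpart g br. Jmap g br z0 x = 0) \<and> x0 = 0"
    fix t
    have init': "c 0 = z0" using init h by simp
    interpret c3: case3 br g z0 c
      by (rule case3.intro[OF nset.intro[OF nil ip zndeg] case3_axioms.intro[OF z0 geo init']])
    have L0: "c3.Lam = {}"
    proof (rule ccontr)
      assume "c3.Lam \<noteq> {}"
      then obtain l x where "l > 0" "x \<in> V" "x \<noteq> 0" "J z0 (J z0 x) = (-(l^2)) *\<^sub>R x"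
        unfolding c3.Lam_def by blast
      then show False using h by simp
    qed
    show "\<not> conjugate_at g br c t"
    proof (cases "t = 0")
      case True then show ?thesis unfolding conjugate_at_def by simp
    next
      case False
      have "c3.Ht t \<subseteq> c3.Lam" using c3.Ht_def[OF False] by auto
      then show ?thesis using c3.conj_iff[OF False] L0 by simp
    qed
  qed
  have P2: "((\<forall>x\<in>vpart g br. Jmap g br z0 x = 0) \<and> x0 \<noteq> 0 \<longrightarrow>
        (\<forall>t. t \<noteq> 0 \<longrightarrow>
          (conjugate_at g br c t \<longleftrightarrow>
             (\<exists>z\<in>lie_center br. z \<noteq> 0 \<and> br x0 (Jmap g br z x0) = (- 12 / t\<^sup>2) *\<^sub>R z))
          \<and> ((\<exists>z\<in>lie_center br. z \<noteq> 0 \<and> br x0 (Jmap g br z x0) = (- 12 / t\<^sup>2) *\<^sub>R z) \<longrightarrow>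
               mult_cp g br c t =
                 dim {z\<in>lie_center br. br x0 (Jmap g br z x0) + (12 / t\<^sup>2) *\<^sub>R z = 0}
               \<and> dim {z\<in>lie_center br. br x0 (Jmap g br z x0) + (12 / t\<^sup>2) *\<^sub>R z = 0}
                   \<le> dim (lie_center br))))"
  proof (intro impI allI)
    assume h: "(\<forall>x\<in>vpart g br. Jmap g br z0 x = 0) \<and> x0 \<noteq> 0"
    fix t :: real assume t: "t \<noteq> 0"
    have Jz0: "J z0 b = 0" for b
    proof -
      obtain bz where bz: "bz \<in> Z" "b - bz \<in> V" using decomp by blast
      have 1: "J z0 bz = 0" using bz(1) by simp
      have 2: "J z0 (b - bz) = 0" using bz(2) h by blast
      have "J z0 b = J z0 (bz + (b - bz))" by simp
      also have "\<dots> = J z0 bz + J z0 (b - bz)" by (rule J_add2)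
      finally show ?thesis using 1 2 by simp
    qed
    interpret c2: case2 br g z0 x0 c
      by (rule case2.intro[OF nset.intro[OF nil ip zndeg] case2_axioms.intro[OF z0 x0 Jz0 geo init]])
    have key: "(a = (- 12 / t\<^sup>2) *\<^sub>R z) = (a + (12 / t\<^sup>2) *\<^sub>R z = 0)" for a z :: 'n
    proof -
      have "(- 12 / t\<^sup>2) *\<^sub>R z = - ((12 / t\<^sup>2) *\<^sub>R z)" by simp
      then show ?thesis by (metis eq_neg_iff_add_eq_0)
    qed
    have E: "(\<exists>z\<in>Z. z \<noteq> 0 \<and> br x0 (J z x0) = (- 12 / t\<^sup>2) *\<^sub>R z) \<longleftrightarrow> (\<exists>z\<in>c2.E2 t. z \<noteq> 0)"
      unfolding c2.E2_def[OF t] key by blast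
    have M: "mult_cp g br c t = dim (c2.E2 t)"
      unfolding mult_cp_def using c2.dimJS[OF t] unfolding c2.JS_def[OF t] .
    have D: "dim (c2.E2 t) \<le> dim Z" unfolding c2.E2_def[OF t] by (rule dim_subset) auto
    have E2eq: "c2.E2 t = {z\<in>lie_center br. br x0 (Jmap g br z x0) + (12 / t\<^sup>2) *\<^sub>R z = 0}"
      by (rule c2.E2_def[OF t])
    show "(conjugate_at g br c t \<longleftrightarrow>
             (\<exists>z\<in>lie_center br. z \<noteq> 0 \<and> br x0 (Jmap g br z x0) = (- 12 / t\<^sup>2) *\<^sub>R z))
          \<and> ((\<exists>z\<in>lie_center br. z \<noteq> 0 \<and> br x0 (Jmap g br z x0) = (- 12 / t\<^sup>2) *\<^sub>R z) \<longrightarrow>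
               mult_cp g br c t =
                 dim {z\<in>lie_center br. br x0 (Jmap g br z x0) + (12 / t\<^sup>2) *\<^sub>R z = 0}
               \<and> dim {z\<in>lie_center br. br x0 (Jmap g br z x0) + (12 / t\<^sup>2) *\<^sub>R z = 0}
                   \<le> dim (lie_center br))"
    proof -
      have C: "conjugate_at g br c t \<longleftrightarrow> (\<exists>z\<in>Z. z \<noteq> 0 \<and> br x0 (J z x0) = (- 12 / t\<^sup>2) *\<^sub>R z)"
        by (rule trans[OF c2.conj_iff[OF t] E[symmetric]])
      have MM: "mult_cp g br c t = dim {z\<in>lie_center br. br x0 (Jmap g br z x0) + (12 / t\<^sup>2) *\<^sub>R z = 0}"
        using M unfolding E2eq .
      have DD: "dim {z\<in>lie_center br. br x0 (Jmap g br z x0) + (12 / t\<^sup>2) *\<^sub>R z = 0} \<le> dim Z"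
        using D unfolding E2eq .
      show ?thesis using C MM DD by blast
    qed
  qed
  have P3: "((\<exists>x\<in>vpart g br. Jmap g br z0 x \<noteq> 0) \<and> x0 = 0 \<longrightarrow>
       (let \<Lambda> = {l::real. l > 0 \<and>
                  (\<exists>x\<in>vpart g br. x \<noteq> 0 \<and> Jmap g br z0 (Jmap g br z0 x) = (- l\<^sup>2) *\<^sub>R x)}
        in (\<forall>t. conjugate_at g br c t \<longleftrightarrow>
                (\<exists>l\<in>\<Lambda>. \<exists>n::int. n \<noteq> 0 \<and> t = 2 * pi / l * of_int n))
         \<and> (\<forall>l\<in>\<Lambda>. \<forall>n::int. n \<noteq> 0 \<longrightarrow>
               mult_cp g br c (2 * pi / l * of_int n) =
                 (\<Sum>h\<in>{h\<in>\<Lambda>. \<exists>m::int. m \<noteq> 0 \<and> h = of_int m * (l / of_int n)}.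
                    dim {x\<in>vpart g br. Jmap g br z0 (Jmap g br z0 x) + h\<^sup>2 *\<^sub>R x = 0})
               \<and> (\<Sum>h\<in>{h\<in>\<Lambda>. \<exists>m::int. m \<noteq> 0 \<and> h = of_int m * (l / of_int n)}.
                    dim {x\<in>vpart g br. Jmap g br z0 (Jmap g br z0 x) + h\<^sup>2 *\<^sub>R x = 0})
                  \<le> dim (vpart g br))))"
  proof (intro impI)
    assume h: "(\<exists>x\<in>vpart g br. Jmap g br z0 x \<noteq> 0) \<and> x0 = 0"
    have init': "c 0 = z0" using init h by simp
    interpret c3: case3 br g z0 c
      by (rule case3.intro[OF nset.intro[OF nil ip zndeg] case3_axioms.intro[OF z0 geo init']])
    have Lam: "{l::real. l > 0 \<and> (\<exists>x\<in>V. x \<noteq> 0 \<and> J z0 (J z0 x) = (- l\<^sup>2) *\<^sub>R x)} = c3.Lam"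
      unfolding c3.Lam_def by simp
    have A: "conjugate_at g br c t \<longleftrightarrow> (\<exists>l\<in>c3.Lam. \<exists>n::int. n \<noteq> 0 \<and> t = 2 * pi / l * of_int n)" for t
    proof (cases "t = 0")
      case True
      have "\<not> (\<exists>l\<in>c3.Lam. \<exists>n::int. n \<noteq> 0 \<and> t = 2 * pi / l * of_int n)"
        using True c3.Lam_pos by auto
      then show ?thesis using True unfolding conjugate_at_def by simp
    next
      case False
      have "c3.Ht t \<noteq> {} \<longleftrightarrow> (\<exists>l\<in>c3.Lam. \<exists>n::int. n \<noteq> 0 \<and> t = 2 * pi / l * of_int n)"
      proof
        assume "c3.Ht t \<noteq> {}"
        then obtain l m where l: "l \<in> c3.Lam" and m: "l * t = 2 * pi * of_int (m::int)"
          unfolding c3.Ht_def[OF False] by blast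
        have lp: "l > 0" using l c3.Lam_pos by auto
        have "m \<noteq> 0" using m lp False by auto
        moreover have "t = 2 * pi / l * of_int m" using m lp by (simp add: field_simps)
        ultimately show "\<exists>l\<in>c3.Lam. \<exists>n::int. n \<noteq> 0 \<and> t = 2 * pi / l * of_int n" using l by blast
      next
        assume "\<exists>l\<in>c3.Lam. \<exists>n::int. n \<noteq> 0 \<and> t = 2 * pi / l * of_int n"
        then obtain l n where l: "l \<in> c3.Lam" and n: "t = 2 * pi / l * of_int (n::int)" by blast
        have lp: "l > 0" using l c3.Lam_pos by auto
        have "l * t = 2 * pi * of_int n" using n lp by simp
        then show "c3.Ht t \<noteq> {}" unfolding c3.Ht_def[OF False] using l by blast
      qed
      then show ?thesis using c3.conj_iff[OF False] by simp
    qed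
    have B: "mult_cp g br c (2 * pi / l * of_int n) =
                 (\<Sum>h\<in>{h\<in>c3.Lam. \<exists>m::int. m \<noteq> 0 \<and> h = of_int m * (l / of_int n)}.
                    dim {x\<in>V. J z0 (J z0 x) + h\<^sup>2 *\<^sub>R x = 0})
               \<and> (\<Sum>h\<in>{h\<in>c3.Lam. \<exists>m::int. m \<noteq> 0 \<and> h = of_int m * (l / of_int n)}.
                    dim {x\<in>V. J z0 (J z0 x) + h\<^sup>2 *\<^sub>R x = 0})
                  \<le> dim V" if l: "l \<in> c3.Lam" and n: "n \<noteq> 0" for l n
    proof -
      define t where "t = 2 * pi / l * of_int n"
      have lp: "l > 0" using l c3.Lam_pos by auto
      have t: "t \<noteq> 0" unfolding t_def using lp n by simp
      have Hs: "{h\<in>c3.Lam. \<exists>m::int. m \<noteq> 0 \<and> h = of_int m * (l / of_int n)} = c3.Ht t"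
      proof (intro set_eqI iffI)
        fix h assume "h \<in> {h\<in>c3.Lam. \<exists>m::int. m \<noteq> 0 \<and> h = of_int m * (l / of_int n)}"
        then obtain m :: int where hm: "h \<in> c3.Lam" "h = of_int m * (l / of_int n)" by blast
        have "h * t = 2 * pi * of_int m" unfolding t_def hm(2) using lp n by (simp add: field_simps)
        then show "h \<in> c3.Ht t" unfolding c3.Ht_def[OF t] using hm(1) by blast
      next
        fix h assume "h \<in> c3.Ht t"
        then obtain m :: int where hm: "h \<in> c3.Lam" "h * t = 2 * pi * of_int m" unfolding c3.Ht_def[OF t] by blast
        have hp: "h > 0" using hm(1) c3.Lam_pos by auto
        have "m \<noteq> 0" using hm(2) hp t by auto
        moreover have "h = of_int m * (l / of_int n)"
          using hm(2) lp n unfolding t_def by (simp add: field_simps)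
        ultimately show "h \<in> {h\<in>c3.Lam. \<exists>m::int. m \<noteq> 0 \<and> h = of_int m * (l / of_int n)}"
          using hm(1) by blast
      qed
      have S: "(\<Sum>h\<in>c3.Ht t. dim {x\<in>V. J z0 (J z0 x) + h\<^sup>2 *\<^sub>R x = 0}) = (\<Sum>h\<in>c3.Ht t. dim (c3.Eg h))"
        by (rule sum.cong[OF refl]) (use c3.Lam_pos c3.Ek_eq in \<open>auto simp: c3.Ht_def[OF t]\<close>)
      have M: "mult_cp g br c t = dim (c3.W3 t)"
        unfolding mult_cp_def using c3.dimJS[OF t] unfolding c3.JS_def[OF t] .
      have "dim (c3.W3 t) \<le> dim V" using c3.W3_V[OF t] by (rule dim_subset)
      then show ?thesis unfolding t_def[symmetric] Hs S M c3.dimW3[OF t, symmetric] by simp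
    qed
    show "let \<Lambda> = {l::real. l > 0 \<and>
                  (\<exists>x\<in>vpart g br. x \<noteq> 0 \<and> Jmap g br z0 (Jmap g br z0 x) = (- l\<^sup>2) *\<^sub>R x)}
        in (\<forall>t. conjugate_at g br c t \<longleftrightarrow>
                (\<exists>l\<in>\<Lambda>. \<exists>n::int. n \<noteq> 0 \<and> t = 2 * pi / l * of_int n))
         \<and> (\<forall>l\<in>\<Lambda>. \<forall>n::int. n \<noteq> 0 \<longrightarrow>
               mult_cp g br c (2 * pi / l * of_int n) =
                 (\<Sum>h\<in>{h\<in>\<Lambda>. \<exists>m::int. m \<noteq> 0 \<and> h = of_int m * (l / of_int n)}.
                    dim {x\<in>vpart g br. Jmap g br z0 (Jmap g br z0 x) + h\<^sup>2 *\<^sub>R x = 0})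
               \<and> (\<Sum>h\<in>{h\<in>\<Lambda>. \<exists>m::int. m \<noteq> 0 \<and> h = of_int m * (l / of_int n)}.
                    dim {x\<in>vpart g br. Jmap g br z0 (Jmap g br z0 x) + h\<^sup>2 *\<^sub>R x = 0})
                  \<le> dim (vpart g br))"
      unfolding Let_def Lam
    proof (rule conjI)
      show "\<forall>t. conjugate_at g br c t \<longleftrightarrow> (\<exists>l\<in>c3.Lam. \<exists>n::int. n \<noteq> 0 \<and> t = 2 * pi / l * of_int n)"
        by (intro allI) (rule A)
    next
      show "\<forall>l\<in>c3.Lam. \<forall>n::int. n \<noteq> 0 \<longrightarrow>
               mult_cp g br c (2 * pi / l * of_int n) =
                 (\<Sum>h\<in>{h\<in>c3.Lam. \<exists>m::int. m \<noteq> 0 \<and> h = of_int m * (l / of_int n)}.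
                    dim {x\<in>V. J z0 (J z0 x) + h\<^sup>2 *\<^sub>R x = 0})
               \<and> (\<Sum>h\<in>{h\<in>c3.Lam. \<exists>m::int. m \<noteq> 0 \<and> h = of_int m * (l / of_int n)}.
                    dim {x\<in>V. J z0 (J z0 x) + h\<^sup>2 *\<^sub>R x = 0})
                  \<le> dim V"
        by (intro ballI allI impI) (rule B)
    qed
  qed
  show ?thesis using P1 P2 P3 by blast
qed

end
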